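(* Let $f \in \mathcal{C}^1(\mathbb{R},\mathbb{R})$ be such that $|\!|\!|f|\!|\!| < \infty$, let $\lambda \ge 1$, and let $\kappa \in (0,\frac12)$. Then, for every rough path $(X,\mathbb{X})$ on $S^1$ and every path $(Y,Y')$ controlled by $X$ for which the right-hand side below is finite, the bound $$\Bigl|\int_{S^1} f(\lambda x) Y(x)\,dX(x)\Bigr| \le C\Bigl(\lambda^{\kappa - \frac12} |Y(0)|\, \|X\|_{\frac12-\kappa} + \lambda^{2\kappa-1} \mathscr{K}^\kappa(Y,X)\Bigr)$$ holds uniformly for all $\lambda > 1$, with a constant $C$ depending only on $|\!|\!|f|\!|\!|$ (for the given $\kappa$).
   Context: $S^1$ is identified with $[0,2\pi)$. For $X\colon S^1\to\mathbb{R}$ and $\alpha\in(0,1]$, $\|X\|_\alpha=\sup_{x\ne y}|\delta X(x,y)|/|x-y|^\alpha$ with $\delta X(x,y)=X(y)-X(x)$; $\|X\|_{\mathcal{C}^\alpha}=\|X\|_\alpha+\|X\|_\infty$; for a function $\mathbb{X}$ of two variables, $\|\mathbb{X}\|_\alpha=\sup_{x\neq y}|\mathbb{X}(x,y)|/|x-y|^\alpha$. A (scalar) rough path is a pair $(X,\mathbb{X})$ with $X$ continuous and $\mathbb{X}$ a continuous function of two variables vanishing on the diagonal satisfying $\mathbb{X}(x,z)-\mathbb{X}(x,y)-\mathbb{X}(y,z)=\delta X(x,y)\,\delta X(y,z)$ (with the periodicity convention that two-variable functions on $S^1$ are evaluated with $x\in[0,2\pi)$, $y\in[x,x+2\pi)$).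 A pair $(Y,Y')$ is controlled by $X$ with remainder $R^Y(x,y)=\delta Y(x,y)-Y'(x)\,\delta X(x,y)$. The rough integral $\int Z\,dX$ of a controlled pair $(Z,Z')$ is the limit, as the mesh of the partition $\mathcal{P}$ of the integration interval tends to $0$, of $\sum_{[x,y]\in\mathcal{P}}\bigl(Z(x)\delta X(x,y)+Z'(x)\mathbb{X}(x,y)\bigr)$; here $Z(x)=f(\lambda x)Y(x)$ with derivative process $Z'(x)=f(\lambda x)Y'(x)$. Define $\mathscr{K}^\kappa(Y,X)=\|Y\|_{\frac12-\kappa}\|X\|_{\frac12-\kappa}+\|\mathbb{X}\|_{1-2\kappa}\|Y'\|_{\mathcal{C}^{3\kappa}}+\|R^Y\|_{\frac12+2\kappa}\|X\|_{\frac12-\kappa}$, and for $f\in\mathcal{C}^1$, $|\!|\!|f|\!|\!|=\sum_{n\in\mathbb{Z}}\sqrt{1+|n|}\sup_{0\le t\le1}(|f(n+t)|+|f'(n+t)|)$. *)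

theory Defs
  imports "HOL-Analysis.Analysis"
begin

text \<open>S^1 is identified with [0, 2 pi). Functions on S^1 are modelled as 2 pi-periodic
  functions on the reals; two-variable functions are evaluated with x in [0,2 pi),
  y in [x, x + 2 pi), and |x - y| = y - x there.\<close>

definition circ_periodic :: "(real \<Rightarrow> real) \<Rightarrow> bool" where
  "circ_periodic X \<longleftrightarrow> (\<forall>x. X (x + 2*pi) = X x)"

definition incr :: "(real \<Rightarrow> real) \<Rightarrow> real \<Rightarrow> real \<Rightarrow> real" where
  "incr X x y = X y - X x"

definition hpairs :: "(real \<times> real) set" where
  "hpairs = {(x, y). 0 \<le> x \<and> x < 2*pi \<and> x < y \<and> y < x + 2*pi}"

definition hquot2 :: "real \<Rightarrow> (real \<Rightarrow> real \<Rightarrow> real) \<Rightarrow> real set" where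
  "hquot2 \<alpha> G = (\<lambda>(x, y). \<bar>G x y\<bar> / (y - x) powr \<alpha>) ` hpairs"

definition hnorm2 :: "real \<Rightarrow> (real \<Rightarrow> real \<Rightarrow> real) \<Rightarrow> real" where
  "hnorm2 \<alpha> G = Sup (hquot2 \<alpha> G)"

definition hfin2 :: "real \<Rightarrow> (real \<Rightarrow> real \<Rightarrow> real) \<Rightarrow> bool" where
  "hfin2 \<alpha> G \<longleftrightarrow> bdd_above (hquot2 \<alpha> G)"

definition hnorm :: "real \<Rightarrow> (real \<Rightarrow> real) \<Rightarrow> real" where
  "hnorm \<alpha> X = hnorm2 \<alpha> (incr X)"

definition hfin :: "real \<Rightarrow> (real \<Rightarrow> real) \<Rightarrow> bool" where
  "hfin \<alpha> X \<longleftrightarrow> hfin2 \<alpha> (incr X)"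

definition supnorm :: "(real \<Rightarrow> real) \<Rightarrow> real" where
  "supnorm X = Sup ((\<lambda>x. \<bar>X x\<bar>) ` {0..<2*pi})"

definition supfin :: "(real \<Rightarrow> real) \<Rightarrow> bool" where
  "supfin X \<longleftrightarrow> bdd_above ((\<lambda>x. \<bar>X x\<bar>) ` {0..<2*pi})"

definition cnorm :: "real \<Rightarrow> (real \<Rightarrow> real) \<Rightarrow> real" where
  "cnorm \<alpha> X = hnorm \<alpha> X + supnorm X"

definition red2 :: "(real \<Rightarrow> real \<Rightarrow> real) \<Rightarrow> real \<Rightarrow> real \<Rightarrow> real" where
  "red2 G x y = (let s = 2*pi * of_int \<lfloor>x / (2*pi)\<rfloor> in G (x - s) (y - s))"

definition rdomain :: "(real \<times> real) set" where
  "rdomain = {(x, y). 0 \<le> x \<and> x < 2*pi \<and> x \<le> y \<and> y < x + 2*pi}"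

definition rough_path :: "(real \<Rightarrow> real) \<Rightarrow> (real \<Rightarrow> real \<Rightarrow> real) \<Rightarrow> bool" where
  "rough_path X XX \<longleftrightarrow>
     circ_periodic X \<and> continuous_on UNIV X \<and>
     continuous_on rdomain (\<lambda>p. XX (fst p) (snd p)) \<and>
     (\<forall>x. 0 \<le> x \<and> x < 2*pi \<longrightarrow> XX x x = 0) \<and>
     (\<forall>x y z. 0 \<le> x \<and> x < 2*pi \<and> x \<le> y \<and> y \<le> z \<and> z < x + 2*pi \<longrightarrow>
        XX x z - XX x y - red2 XX y z = incr X x y * incr X y z)"

definition remainder :: "(real \<Rightarrow> real) \<Rightarrow> (real \<Rightarrow> real) \<Rightarrow> (real \<Rightarrow> real) \<Rightarrow> real \<Rightarrow> real \<Rightarrow> real" where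
  "remainder Y Y' X x y = incr Y x y - Y' x * incr X x y"

definition partition :: "nat \<Rightarrow> (nat \<Rightarrow> real) \<Rightarrow> bool" where
  "partition n p \<longleftrightarrow> n \<ge> 1 \<and> p 0 = 0 \<and> p n = 2*pi \<and> (\<forall>k<n. p k < p (Suc k))"

definition mesh :: "nat \<Rightarrow> (nat \<Rightarrow> real) \<Rightarrow> real" where
  "mesh n p = Max ((\<lambda>k. p (Suc k) - p k) ` {..<n})"

definition rsum :: "(real \<Rightarrow> real) \<Rightarrow> (real \<Rightarrow> real) \<Rightarrow> (real \<Rightarrow> real) \<Rightarrow> (real \<Rightarrow> real \<Rightarrow> real)
                    \<Rightarrow> nat \<Rightarrow> (nat \<Rightarrow> real) \<Rightarrow> real" where
  "rsum Z Z' X XX n p = (\<Sum>k<n. Z (p k) * incr X (p k) (p (Suc k)) + Z' (p k) * XX (p k) (p (Suc k)))"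

definition has_rough_integral :: "(real \<Rightarrow> real) \<Rightarrow> (real \<Rightarrow> real) \<Rightarrow> (real \<Rightarrow> real)
                    \<Rightarrow> (real \<Rightarrow> real \<Rightarrow> real) \<Rightarrow> real \<Rightarrow> bool" where
  "has_rough_integral Z Z' X XX I \<longleftrightarrow>
     (\<forall>\<epsilon>>0. \<exists>\<delta>>0. \<forall>n p. partition n p \<and> mesh n p < \<delta> \<longrightarrow> \<bar>rsum Z Z' X XX n p - I\<bar> < \<epsilon>)"

definition Kkappa :: "real \<Rightarrow> (real \<Rightarrow> real) \<Rightarrow> (real \<Rightarrow> real) \<Rightarrow> (real \<Rightarrow> real)
                       \<Rightarrow> (real \<Rightarrow> real \<Rightarrow> real) \<Rightarrow> real" where
  "Kkappa \<kappa> Y Y' X XX =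
     hnorm (1/2 - \<kappa>) Y * hnorm (1/2 - \<kappa>) X
     + hnorm2 (1 - 2*\<kappa>) XX * cnorm (3*\<kappa>) Y'
     + hnorm2 (1/2 + 2*\<kappa>) (remainder Y Y' X) * hnorm (1/2 - \<kappa>) X"

definition C1 :: "(real \<Rightarrow> real) \<Rightarrow> bool" where
  "C1 f \<longleftrightarrow> (\<forall>x. f differentiable (at x)) \<and> continuous_on UNIV (deriv f)"

definition tseq :: "(real \<Rightarrow> real) \<Rightarrow> int \<Rightarrow> real" where
  "tseq f n = sqrt (1 + \<bar>real_of_int n\<bar>) *
     Sup ((\<lambda>t. \<bar>f (real_of_int n + t)\<bar> + \<bar>deriv f (real_of_int n + t)\<bar>) ` {0..1})"

definition triple_finite :: "(real \<Rightarrow> real) \<Rightarrow> bool" where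
  "triple_finite f \<longleftrightarrow> tseq f summable_on (UNIV :: int set)"

definition triple :: "(real \<Rightarrow> real) \<Rightarrow> real" where
  "triple f = infsum (tseq f) (UNIV :: int set)"

end

theory Submission
  imports Defs
begin


definition nxt :: "real set \<Rightarrow> real \<Rightarrow> real" where
  "nxt A a = Min {b\<in>A. a < b}"

definition ssum :: "(real \<Rightarrow> real \<Rightarrow> real) \<Rightarrow> real set \<Rightarrow> real" where
  "ssum G A = (\<Sum>a\<in>A - {Max A}. G a (nxt A a))"

lemma Min_sub_eq:
  fixes S T :: "real set"
  assumes "finite S" "T \<subseteq> S" "Min S \<in> T"
  shows "Min T = Min S"
proof -
  have "finite T" using assms finite_subset by blast
  have "T \<noteq> {}" using assms by auto
  show ?thesis
    by (metis \<open>finite T\<close> \<open>T \<noteq> {}\<close> assms Min.coboundedI Min_in antisym_conv empty_iff in_mono)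
qed

lemma ssum_single: "ssum G {a} = 0"
  by (simp add: ssum_def)

lemma ssum_two:
  assumes "a < b" shows "ssum G {a, b} = G a b"
proof -
  have "Max {a,b} = b" using assms by auto
  moreover have "{a,b} - {b} = {a}" using assms by auto
  moreover have "{x\<in>{a,b}. a < x} = {b}" using assms by auto
  ultimately show ?thesis by (simp add: ssum_def nxt_def)
qed

lemma ssum_split:
  assumes fin: "finite A" and c: "c \<in> A"
  shows "ssum G A = ssum G {x\<in>A. x \<le> c} + ssum G {x\<in>A. c \<le> x}"
proof -
  define L where "L = {x\<in>A. x \<le> c}"
  define R where "R = {x\<in>A. c \<le> x}"
  have finL: "finite L" "finite R" using fin by (auto simp: L_def R_def)
  have cL: "c \<in> L" "c \<in> R" using c by (auto simp: L_def R_def)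
  have MaxL: "Max L = c" using finL cL by (intro Max_eqI) (auto simp: L_def)
  have MaxR: "Max R = Max A"
  proof -
    have "Max A \<in> A" using fin c Max_in by auto
    moreover have "c \<le> Max A" using fin c by simp
    ultimately have "Max A \<in> R" by (simp add: R_def)
    then show ?thesis using finL fin by (intro Max_eqI) (auto simp: R_def)
  qed
  have dec: "A - {Max A} = (L - {c}) \<union> (R - {Max A})"
  proof -
    have "c \<le> Max A" using fin c by simp
    then show ?thesis using MaxR by (auto simp: L_def R_def)
  qed
  have disj: "(L - {c}) \<inter> (R - {Max A}) = {}" by (auto simp: L_def R_def)
  have nL: "nxt L a = nxt A a" if "a \<in> L - {c}" for a
  proof -
    have ac: "a < c" using that by (auto simp: L_def)
    have fS: "finite {b\<in>A. a < b}" using fin by auto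
    have cS: "c \<in> {b\<in>A. a < b}" using ac c by auto
    hence "Min {b\<in>A. a < b} \<le> c" using fS by simp
    moreover have "Min {b\<in>A. a < b} \<in> {b\<in>A. a < b}" using fS cS Min_in by blast
    ultimately have "Min {b\<in>A. a < b} \<in> {b\<in>L. a < b}" by (auto simp: L_def)
    moreover have "{b\<in>L. a < b} \<subseteq> {b\<in>A. a < b}" by (auto simp: L_def)
    ultimately show ?thesis unfolding nxt_def using Min_sub_eq[OF fS] by blast
  qed
  have nR: "nxt R a = nxt A a" if "a \<in> R - {Max A}" for a
  proof -
    have "{b\<in>R. a < b} = {b\<in>A. a < b}" using that by (auto simp: R_def)
    thus ?thesis by (simp add: nxt_def)
  qed
  have "ssum G A = (\<Sum>a\<in>(L - {c}) \<union> (R - {Max A}). G a (nxt A a))"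
    by (simp add: ssum_def dec)
  also have "\<dots> = (\<Sum>a\<in>L - {c}. G a (nxt A a)) + (\<Sum>a\<in>R - {Max A}. G a (nxt A a))"
    using finL disj by (intro sum.union_disjoint) auto
  also have "(\<Sum>a\<in>L - {c}. G a (nxt A a)) = ssum G L"
    unfolding ssum_def MaxL using nL by (intro sum.cong) auto
  also have "(\<Sum>a\<in>R - {Max A}. G a (nxt A a)) = ssum G R"
    unfolding ssum_def MaxR using nR by (intro sum.cong) auto
  finally show ?thesis by (simp add: L_def R_def)
qed

lemma part_mono:
  fixes p :: "nat \<Rightarrow> real"
  assumes "\<forall>k<n. p k < p (Suc k)" "i \<le> j" "j \<le> n"
  shows "p i \<le> p j"
  using assms(2,3)
proof (induction j)
  case 0 then show ?case by simp
next
  case (Suc j)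
  show ?case
  proof (cases "i = Suc j")
    case True then show ?thesis by simp
  next
    case False
    then have "p i \<le> p j" using Suc by simp
    also have "p j < p (Suc j)" using assms(1) Suc by simp
    finally show ?thesis by simp
  qed
qed

lemma refine:
  fixes p :: "nat \<Rightarrow> real"
  assumes "\<forall>k<n. p k < p (Suc k)" "finite B" "p ` {0..n} \<subseteq> B" "B \<subseteq> {p 0..p n}"
  shows "\<bar>ssum G B - (\<Sum>k<n. G (p k) (p (Suc k)))\<bar>
     \<le> (\<Sum>k<n. \<bar>ssum G (B \<inter> {p k..p (Suc k)}) - G (p k) (p (Suc k))\<bar>)"
  using assms
proof (induction n arbitrary: B)
  case 0
  then have "B = {p 0}" by auto
  then show ?case by (simp add: ssum_single)
next
  case (Suc n)
  define B1 where "B1 = {x\<in>B. x \<le> p n}"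
  define B2 where "B2 = {x\<in>B. p n \<le> x}"
  have pn: "p n \<in> B" using Suc.prems by auto
  have spl: "ssum G B = ssum G B1 + ssum G B2"
    unfolding B1_def B2_def using ssum_split[OF Suc.prems(2) pn] .
  have mono: "p i \<le> p j" if "i \<le> j" "j \<le> Suc n" for i j
    using part_mono[OF Suc.prems(1) that] .
  have h1: "\<forall>k<n. p k < p (Suc k)" using Suc.prems by auto
  have h2: "finite B1" using Suc.prems by (simp add: B1_def)
  have h3: "p ` {0..n} \<subseteq> B1" using Suc.prems(3) mono by (auto simp: B1_def)
  have h4: "B1 \<subseteq> {p 0..p n}" using Suc.prems(4) by (auto simp: B1_def)
  have IH: "\<bar>ssum G B1 - (\<Sum>k<n. G (p k) (p (Suc k)))\<bar>
     \<le> (\<Sum>k<n. \<bar>ssum G (B1 \<inter> {p k..p (Suc k)}) - G (p k) (p (Suc k))\<bar>)"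
    using Suc.IH[OF h1 h2 h3 h4] .
  have eqk: "B1 \<inter> {p k..p (Suc k)} = B \<inter> {p k..p (Suc k)}" if "k < n" for k
    using mono[of "Suc k" n] that by (auto simp: B1_def)
  have B2eq: "B2 = B \<inter> {p n..p (Suc n)}" using Suc.prems(4) by (auto simp: B2_def)
  have "\<bar>ssum G B - (\<Sum>k<Suc n. G (p k) (p (Suc k)))\<bar>
      = \<bar>(ssum G B1 - (\<Sum>k<n. G (p k) (p (Suc k)))) + (ssum G B2 - G (p n) (p (Suc n)))\<bar>"
    by (simp add: spl)
  also have "\<dots> \<le> \<bar>ssum G B1 - (\<Sum>k<n. G (p k) (p (Suc k)))\<bar> + \<bar>ssum G B2 - G (p n) (p (Suc n))\<bar>"
    by (rule abs_triangle_ineq)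
  also have "\<dots> \<le> (\<Sum>k<n. \<bar>ssum G (B1 \<inter> {p k..p (Suc k)}) - G (p k) (p (Suc k))\<bar>) + \<bar>ssum G B2 - G (p n) (p (Suc n))\<bar>"
    using IH by simp
  also have "(\<Sum>k<n. \<bar>ssum G (B1 \<inter> {p k..p (Suc k)}) - G (p k) (p (Suc k))\<bar>)
     = (\<Sum>k<n. \<bar>ssum G (B \<inter> {p k..p (Suc k)}) - G (p k) (p (Suc k))\<bar>)"
    using eqk by (intro sum.cong) auto
  finally show ?case by (simp add: B2eq)
qed



lemma sewing:
  fixes Xi :: "real \<Rightarrow> real \<Rightarrow> real" and G w :: "real \<Rightarrow> real"
  assumes diag: "\<And>a. s0 \<le> a \<Longrightarrow> a \<le> t0 \<Longrightarrow> Xi a a = 0"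
  and dXi: "\<And>a b d. s0 \<le> a \<Longrightarrow> a \<le> b \<Longrightarrow> b \<le> d \<Longrightarrow> d \<le> t0 \<Longrightarrow> \<bar>Xi a d - Xi a b - Xi b d\<bar> \<le> w (d - a)"
  and Gnn: "\<And>x. 0 \<le> x \<Longrightarrow> 0 \<le> G x"
  and Gmono: "\<And>x y. 0 \<le> x \<Longrightarrow> x \<le> y \<Longrightarrow> G x \<le> G y"
  and wmono: "\<And>x y. 0 \<le> x \<Longrightarrow> x \<le> y \<Longrightarrow> w x \<le> w y"
  and Grec: "\<And>x. 0 \<le> x \<Longrightarrow> 2 * G (x/2) + 2 * w x \<le> G x"
  shows "finite A \<Longrightarrow> A \<noteq> {} \<Longrightarrow> A \<subseteq> {s0..t0} \<Longrightarrow>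
    \<bar>ssum Xi A - Xi (Min A) (Max A)\<bar> \<le> G (Max A - Min A)"
proof (induction "card A" arbitrary: A rule: less_induct)
  case less
  define s where "s = Min A"
  define t where "t = Max A"
  have sA: "s \<in> A" and tA: "t \<in> A" using less.prems by (auto simp: s_def t_def)
  have bnd: "s \<le> x \<and> x \<le> t" if "x \<in> A" for x using that less.prems by (auto simp: s_def t_def)
  have st: "s \<le> t" using bnd sA by blast
  show ?case
  proof (cases "s = t")
    case True
    then have "A = {s}" using bnd sA by force
    then show ?thesis using diag less.prems Gnn by (simp add: ssum_single)
  next
    case False
    then have st: "s < t" using st by simp
    define mid where "mid = (s + t) / 2"
    define Lm where "Lm = {x\<in>A. x \<le> mid}"
    define c where "c = Max Lm"
    have finLm: "finite Lm" using less.prems by (simp add: Lm_def)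
    have sLm: "s \<in> Lm" using sA st by (simp add: Lm_def mid_def)
    have cLm: "c \<in> Lm" unfolding c_def using finLm sLm Max_in by blast
    have cA: "c \<in> A" and cmid: "c \<le> mid" using cLm by (auto simp: Lm_def)
    have sc: "s \<le> c" using finLm sLm c_def by simp
    have midt: "mid < t" using st by (simp add: mid_def)
    define S' where "S' = {b\<in>A. c < b}"
    define c' where "c' = nxt A c"
    have finS': "finite S'" using less.prems by (simp add: S'_def)
    have tS': "t \<in> S'" using tA cmid midt by (simp add: S'_def)
    have c'S: "c' \<in> S'" unfolding c'_def nxt_def S'_def[symmetric] using finS' tS' Min_in by blast
    have c'A: "c' \<in> A" and cc': "c < c'" using c'S by (auto simp: S'_def)
    have c'min: "c' \<le> b" if "b \<in> A" "c < b" for b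
      unfolding c'_def nxt_def S'_def[symmetric] using finS' that by (simp add: S'_def)
    have c'mid: "mid < c'"
    proof (rule ccontr)
      assume "\<not> mid < c'"
      then have "c' \<in> Lm" using c'A by (simp add: Lm_def)
      then have "c' \<le> c" using finLm by (simp add: c_def)
      then show False using cc' by simp
    qed
    have c't: "c' \<le> t" using bnd c'A by blast
    define L where "L = {x\<in>A. x \<le> c}"
    define R where "R = {x\<in>A. c \<le> x}"
    define R' where "R' = {x\<in>A. c' \<le> x}"
    have spl1: "ssum Xi A = ssum Xi L + ssum Xi R"
      unfolding L_def R_def using ssum_split[OF less.prems(1) cA] .
    have finR: "finite R" using less.prems by (simp add: R_def)
    have c'R: "c' \<in> R" using c'A cc' by (simp add: R_def)
    have spl2: "ssum Xi R = ssum Xi {x\<in>R. x \<le> c'} + ssum Xi {x\<in>R. c' \<le> x}"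
      using ssum_split[OF finR c'R] .
    have two: "{x\<in>R. x \<le> c'} = {c, c'}"
    proof
      show "{x\<in>R. x \<le> c'} \<subseteq> {c, c'}"
      proof
        fix x assume x: "x \<in> {x\<in>R. x \<le> c'}"
        then have "x \<in> A" "c \<le> x" "x \<le> c'" by (auto simp: R_def)
        then show "x \<in> {c, c'}" using c'min[of x] by force
      qed
      show "{c, c'} \<subseteq> {x\<in>R. x \<le> c'}" using cA c'A cc' by (auto simp: R_def)
    qed
    have R'eq: "{x\<in>R. c' \<le> x} = R'" using cc' by (auto simp: R_def R'_def)
    have decomp: "ssum Xi A = ssum Xi L + Xi c c' + ssum Xi R'"
      using spl1 spl2 two R'eq ssum_two[OF cc'] by simp
    have finL: "finite L" "finite R'" using less.prems by (auto simp: L_def R'_def)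
    have neL: "L \<noteq> {}" "R' \<noteq> {}" using sA sc tA c't by (auto simp: L_def R'_def)
    have subL: "L \<subseteq> {s0..t0}" "R' \<subseteq> {s0..t0}" using less.prems by (auto simp: L_def R'_def)
    have cardL: "card L < card A"
    proof (intro psubset_card_mono)
      have "t \<notin> L" "L \<subseteq> A" using cmid midt by (auto simp: L_def)
      then show "L \<subset> A" using tA by blast
    qed (use less.prems(1) in auto)
    have cardR': "card R' < card A"
    proof (intro psubset_card_mono)
      have "s \<notin> R'" "R' \<subseteq> A" using sc cc' by (auto simp: R'_def)
      then show "R' \<subset> A" using sA by blast
    qed (use less.prems(1) in auto)
    have MinL: "Min L = s" using finL neL sA sc bnd by (intro Min_eqI) (auto simp: L_def)
    have MaxL: "Max L = c" using finL neL cA by (intro Max_eqI) (auto simp: L_def)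
    have MinR': "Min R' = c'" using finL neL c'A by (intro Min_eqI) (auto simp: R'_def)
    have MaxR': "Max R' = t" using finL neL tA c't bnd by (intro Max_eqI) (auto simp: R'_def)
    have IHL: "\<bar>ssum Xi L - Xi s c\<bar> \<le> G (c - s)"
      using less.hyps[OF cardL finL(1) neL(1) subL(1)] MinL MaxL by simp
    have IHR: "\<bar>ssum Xi R' - Xi c' t\<bar> \<le> G (t - c')"
      using less.hyps[OF cardR' finL(2) neL(2) subL(2)] MinR' MaxR' by simp
    have s0s: "s0 \<le> s" and tt0: "t \<le> t0" using sA tA less.prems by auto
    have d1: "\<bar>Xi s t - Xi s c - Xi c t\<bar> \<le> w (t - s)"
      using dXi[of s c t] s0s sc cmid midt tt0 by simp
    have d2: "\<bar>Xi c t - Xi c c' - Xi c' t\<bar> \<le> w (t - c)"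
      using dXi[of c c' t] s0s sc cc' c't tt0 by simp
    have d2': "w (t - c) \<le> w (t - s)" using wmono sc cmid midt by simp
    have g1: "G (c - s) \<le> G ((t - s)/2)" using Gmono sc cmid by (simp add: mid_def)
    have g2: "G (t - c') \<le> G ((t - s)/2)" using Gmono c't c'mid by (simp add: mid_def)
    have rec: "2 * G ((t - s)/2) + 2 * w (t - s) \<le> G (t - s)" using Grec st by simp
    have "ssum Xi A - Xi s t = (ssum Xi L - Xi s c) + (ssum Xi R' - Xi c' t)
        - (Xi s t - Xi s c - Xi c t) - (Xi c t - Xi c c' - Xi c' t)"
      using decomp by simp
    then have "\<bar>ssum Xi A - Xi s t\<bar> \<le> \<bar>ssum Xi L - Xi s c\<bar> + \<bar>ssum Xi R' - Xi c' t\<bar>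
        + \<bar>Xi s t - Xi s c - Xi c t\<bar> + \<bar>Xi c t - Xi c c' - Xi c' t\<bar>" by linarith
    also have "\<dots> \<le> G (t - s)" using IHL IHR d1 d2 d2' g1 g2 rec by linarith
    finally show ?thesis by (simp add: s_def t_def)
  qed
qed



definition cst :: "real \<Rightarrow> real" where "cst th = 2 / (1 - 2 powr (1 - th))"

lemma cst_pos: assumes "1 < th" shows "0 < cst th"
proof -
  have "2 powr (1 - th) < 2 powr 0" using assms by (intro powr_less_mono) auto
  then show ?thesis by (simp add: cst_def)
qed

lemma cst_rec:
  assumes "1 < th" "0 \<le> x"
  shows "2 * (cst th * K * (x/2) powr th) + 2 * (K * x powr th) = cst th * K * x powr th"
proof -
  have q: "2 powr (1 - th) < 1"
  proof -
    have "2 powr (1 - th) < 2 powr 0" using assms by (intro powr_less_mono) auto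
    then show ?thesis by simp
  qed
  have h: "(x/2) powr th = x powr th * 2 powr (1 - th) / 2"
    by (simp add: powr_divide powr_diff)
  have "1 - 2 powr (1 - th) \<noteq> 0" using q by linarith
  moreover have "\<And>d::real. d \<noteq> 0 \<Longrightarrow> 2 / d * d = 2" by simp
  ultimately have "cst th * (1 - 2 powr (1 - th)) = 2" unfolding cst_def by blast
  then have e: "K * x powr th * cst th = K * x powr th * (2 + cst th * 2 powr (1 - th))"
    by (simp add: algebra_simps)
  show ?thesis unfolding h using e by (simp add: algebra_simps)
qed

lemma sewing3:
  fixes Xi :: "real \<Rightarrow> real \<Rightarrow> real"
  assumes diag: "\<And>a. lo \<le> a \<Longrightarrow> a \<le> hi \<Longrightarrow> Xi a a = 0"
  and dXi: "\<And>a b d. lo \<le> a \<Longrightarrow> a \<le> b \<Longrightarrow> b \<le> d \<Longrightarrow> d \<le> hi \<Longrightarrow>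
     \<bar>Xi a d - Xi a b - Xi b d\<bar> \<le> K1 * (d - a) powr th1 + K2 * (d - a) powr th2 + K3 * (d - a) powr th3"
  and K: "0 \<le> K1" "0 \<le> K2" "0 \<le> K3" and th: "1 < th1" "1 < th2" "1 < th3"
  and A: "finite A" "A \<noteq> {}" "A \<subseteq> {lo..hi}"
  shows "\<bar>ssum Xi A - Xi (Min A) (Max A)\<bar> \<le>
     cst th1 * K1 * (Max A - Min A) powr th1 + cst th2 * K2 * (Max A - Min A) powr th2
     + cst th3 * K3 * (Max A - Min A) powr th3"
proof -
  define w where "w x = K1 * x powr th1 + K2 * x powr th2 + K3 * x powr th3" for x
  define G where "G x = cst th1 * K1 * x powr th1 + cst th2 * K2 * x powr th2 + cst th3 * K3 * x powr th3" for x
  have c: "0 < cst th1" "0 < cst th2" "0 < cst th3" using th cst_pos by auto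
  have "\<bar>ssum Xi A - Xi (Min A) (Max A)\<bar> \<le> G (Max A - Min A)"
  proof (rule sewing[where w = w])
    show "\<And>a. lo \<le> a \<Longrightarrow> a \<le> hi \<Longrightarrow> Xi a a = 0" by (rule diag)
    show "\<And>a b d. lo \<le> a \<Longrightarrow> a \<le> b \<Longrightarrow> b \<le> d \<Longrightarrow> d \<le> hi \<Longrightarrow> \<bar>Xi a d - Xi a b - Xi b d\<bar> \<le> w (d - a)"
      unfolding w_def by (rule dXi)
    show "\<And>x. 0 \<le> x \<Longrightarrow> 0 \<le> G x" unfolding G_def using K c by (intro add_nonneg_nonneg) auto
    show "G x \<le> G y" if "0 \<le> x" "x \<le> y" for x y
      unfolding G_def using K c that th
      by (intro add_mono mult_left_mono powr_mono2) (auto)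
    show "w x \<le> w y" if "0 \<le> x" "x \<le> y" for x y
      unfolding w_def using K that th
      by (intro add_mono mult_left_mono powr_mono2) (auto)
    show "2 * G (x/2) + 2 * w x \<le> G x" if "0 \<le> x" for x
    proof -
      have "2 * G (x/2) + 2 * w x =
        (2 * (cst th1 * K1 * (x/2) powr th1) + 2 * (K1 * x powr th1))
        + (2 * (cst th2 * K2 * (x/2) powr th2) + 2 * (K2 * x powr th2))
        + (2 * (cst th3 * K3 * (x/2) powr th3) + 2 * (K3 * x powr th3))"
        unfolding G_def w_def by (simp add: algebra_simps)
      also have "\<dots> = G x" unfolding G_def using cst_rec th that by simp
      finally show ?thesis by simp
    qed
  qed (use A in auto)
  then show ?thesis by (simp add: G_def)
qed

lemma partition_mono:
  assumes "partition n p" "i \<le> j" "j \<le> n" shows "p i \<le> p j"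
  using assms part_mono unfolding partition_def by blast

lemma partition_range:
  assumes "partition n p" "k \<le> n" shows "0 \<le> p k" "p k \<le> 2*pi"
  using partition_mono[OF assms(1), of 0 k] partition_mono[OF assms(1), of k n] assms
  unfolding partition_def by auto

lemma mesh_ge:
  assumes "k < n" shows "p (Suc k) - p k \<le> mesh n p"
  unfolding mesh_def using assms by (intro Max_ge) auto

lemma refine_bound:
  fixes p :: "nat \<Rightarrow> real"
  assumes inc: "\<forall>k<n. p k < p (Suc k)" and B: "finite B" "p ` {0..n} \<subseteq> B" "B \<subseteq> {p 0..p n}"
  and g: "\<And>k A. k < n \<Longrightarrow> finite A \<Longrightarrow> A \<noteq> {} \<Longrightarrow> A \<subseteq> {p k..p (Suc k)} \<Longrightarrow>
             \<bar>ssum Xi A - Xi (Min A) (Max A)\<bar> \<le> g k"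
  shows "\<bar>ssum Xi B - (\<Sum>k<n. Xi (p k) (p (Suc k)))\<bar> \<le> (\<Sum>k<n. g k)"
proof -
  have "\<bar>ssum Xi B - (\<Sum>k<n. Xi (p k) (p (Suc k)))\<bar>
     \<le> (\<Sum>k<n. \<bar>ssum Xi (B \<inter> {p k..p (Suc k)}) - Xi (p k) (p (Suc k))\<bar>)"
    by (rule refine[OF inc B])
  also have "\<dots> \<le> (\<Sum>k<n. g k)"
  proof (rule sum_mono)
    fix k assume "k \<in> {..<n}"
    then have k: "k < n" by simp
    define A where "A = B \<inter> {p k..p (Suc k)}"
    have pk: "p k \<in> A" "p (Suc k) \<in> A" using B(2) k inc by (auto simp: A_def)
    have fA: "finite A" using B by (simp add: A_def)
    have "Min A = p k" using fA pk by (intro Min_eqI) (auto simp: A_def)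
    moreover have "Max A = p (Suc k)" using fA pk by (intro Max_eqI) (auto simp: A_def)
    moreover have "A \<noteq> {}" "A \<subseteq> {p k..p (Suc k)}" using pk by (auto simp: A_def)
    ultimately show "\<bar>ssum Xi (B \<inter> {p k..p (Suc k)}) - Xi (p k) (p (Suc k))\<bar> \<le> g k"
      using g[OF k fA] unfolding A_def by simp
  qed
  finally show ?thesis .
qed



lemma powsmall:
  fixes l d th mu :: real
  assumes "0 \<le> l" "l \<le> d" "d \<le> 1" "0 < mu" "1 + mu \<le> th"
  shows "l powr th \<le> l * d powr mu"
proof (cases "l = 0")
  case True then show ?thesis by simp
next
  case False
  then have lp: "0 < l" using assms by simp
  have "l powr th = l * l powr (th - 1)"
    using lp by (simp add: powr_mult_base)
  also have "l powr (th - 1) \<le> d powr (th - 1)" using assms lp by (intro powr_mono2) auto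
  also have "d powr (th - 1) \<le> d powr mu" using assms lp by (intro powr_mono') auto
  finally show ?thesis using lp by (simp add: mult_left_mono)
qed

lemma choose_delta:
  fixes eps A mu :: real
  assumes "0 < eps" "0 \<le> A" "0 < mu"
  shows "\<exists>d>0. d \<le> 1 \<and> A * d powr mu \<le> eps"
proof -
  define a where "a = eps / (A + 1)"
  have ap: "0 < a" using assms by (simp add: a_def)
  define d where "d = min 1 (a powr (1/mu))"
  have dp: "0 < d" using ap by (simp add: d_def)
  have "d powr mu \<le> (a powr (1/mu)) powr mu" using dp assms by (intro powr_mono2) (auto simp: d_def)
  also have "\<dots> = a" using ap assms by (simp add: powr_powr)
  finally have "d powr mu \<le> a" .
  then have "A * d powr mu \<le> A * a" using assms by (simp add: mult_left_mono)
  also have "A * a \<le> eps" using assms by (simp add: a_def field_simps)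
  finally have fin: "A * d powr mu \<le> eps" .
  have d1: "d \<le> 1" by (simp add: d_def)
  show ?thesis using dp d1 fin by blast
qed

lemma uniform_fine:
  assumes "0 < d" shows "\<exists>M. \<forall>j\<ge>M. 2*pi / real (Suc j) \<le> d"
proof -
  obtain M where M: "2*pi / d < real M" using reals_Archimedean2 by blast
  have "2*pi / real (Suc j) \<le> d" if "j \<ge> M" for j
  proof -
    have "2*pi / d < real (Suc j)" using M that by simp
    then have "2*pi < d * real (Suc j)" using assms by (simp add: field_simps)
    then show ?thesis by (simp add: field_simps)
  qed
  then show ?thesis by blast
qed

definition up :: "nat \<Rightarrow> nat \<Rightarrow> real" where "up j i = 2*pi * real i / real (Suc j)"

lemma up_partition: "partition (Suc j) (up j)"
proof -
  have j: "0 < real (Suc j)" by simp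
  have "up j k < up j (Suc k)" for k
    unfolding up_def using j by (intro divide_strict_right_mono mult_strict_left_mono) auto
  moreover have "up j (Suc j) = 2*pi" unfolding up_def using j by simp
  ultimately show ?thesis unfolding partition_def by (simp add: up_def)
qed

lemma up_step: "up j (Suc k) - up j k = 2*pi / real (Suc j)"
proof -
  have j: "0 < real (Suc j)" by simp
  show ?thesis unfolding up_def using j by (simp add: diff_divide_distrib[symmetric] algebra_simps)
qed

lemma abstract_main:
  fixes Xi :: "real \<Rightarrow> real \<Rightarrow> real"
  assumes diag: "\<And>a. 0 \<le> a \<Longrightarrow> a \<le> 2*pi \<Longrightarrow> Xi a a = 0"
  and dXi: "\<And>a b d. 0 \<le> a \<Longrightarrow> a \<le> b \<Longrightarrow> b \<le> d \<Longrightarrow> d \<le> 2*pi \<Longrightarrow> d - a \<le> 1 \<Longrightarrow>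
     \<bar>Xi a d - Xi a b - Xi b d\<bar> \<le> K1 * (d - a) powr th1 + K2 * (d - a) powr th2 + K3 * (d - a) powr th3"
  and K: "0 \<le> K1" "0 \<le> K2" "0 \<le> K3" and mu: "0 < mu"
  and th: "1 + mu \<le> th1" "1 + mu \<le> th2" "1 + mu \<le> th3"
  and E: "partition N e"
  and g: "\<And>k A. k < N \<Longrightarrow> finite A \<Longrightarrow> A \<noteq> {} \<Longrightarrow> A \<subseteq> {e k..e (Suc k)} \<Longrightarrow>
             \<bar>ssum Xi A - Xi (Min A) (Max A)\<bar> \<le> g k"
  shows "\<exists>I. (\<forall>\<epsilon>>0. \<exists>\<delta>>0. \<forall>n p. partition n p \<and> mesh n p < \<delta> \<longrightarrow>
              \<bar>(\<Sum>k<n. Xi (p k) (p (Suc k))) - I\<bar> < \<epsilon>)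
           \<and> \<bar>I\<bar> \<le> \<bar>\<Sum>k<N. Xi (e k) (e (Suc k))\<bar> + (\<Sum>k<N. g k)"
proof -
  define S where "S = cst th1 * K1 + cst th2 * K2 + cst th3 * K3"
  have thg: "1 < th1" "1 < th2" "1 < th3" using th mu by auto
  have S0: "0 \<le> S" unfolding S_def using cst_pos[OF thg(1)] cst_pos[OF thg(2)] cst_pos[OF thg(3)] K
    by (intro add_nonneg_nonneg mult_nonneg_nonneg) auto
  define rs where "rs n p = (\<Sum>k<n. Xi (p k) (p (Suc k)))" for n and p :: "nat \<Rightarrow> real"
  have close: "\<exists>d>0. \<forall>n p B. partition n p \<and> (\<forall>k<n. p (Suc k) - p k \<le> d) \<and> finite B \<and>
      p ` {0..n} \<subseteq> B \<and> B \<subseteq> {0..2*pi} \<longrightarrow> \<bar>ssum Xi B - rs n p\<bar> \<le> eps" if eps: "0 < eps" for eps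
  proof -
    obtain d where d: "0 < d" "d \<le> 1" "(2*pi*S) * d powr mu \<le> eps"
      using choose_delta[OF eps _ mu, of "2*pi*S"] S0 by auto
    have "\<bar>ssum Xi B - rs n p\<bar> \<le> eps"
      if P: "partition n p" "\<forall>k<n. p (Suc k) - p k \<le> d" "finite B" "p ` {0..n} \<subseteq> B" "B \<subseteq> {0..2*pi}"
      for n p B
    proof -
      have inc: "\<forall>k<n. p k < p (Suc k)" and p0: "p 0 = 0" and pn: "p n = 2*pi"
        using P(1) unfolding partition_def by auto
      have "\<bar>ssum Xi B - rs n p\<bar> \<le> (\<Sum>k<n. S * (p (Suc k) - p k) * d powr mu)"
        unfolding rs_def
      proof (rule refine_bound[OF inc P(3,4)])
        show "B \<subseteq> {p 0..p n}" using P(5) p0 pn by simp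
        fix k A assume k: "k < n" and A: "finite A" "A \<noteq> {}" "A \<subseteq> {p k..p (Suc k)}"
        have rng: "0 \<le> p k" "p (Suc k) \<le> 2*pi" using partition_range[OF P(1)] k by auto
        have sw: "\<bar>ssum Xi A - Xi (Min A) (Max A)\<bar> \<le>
           cst th1 * K1 * (Max A - Min A) powr th1 + cst th2 * K2 * (Max A - Min A) powr th2
           + cst th3 * K3 * (Max A - Min A) powr th3"
        proof (rule sewing3[where lo = "p k" and hi = "p (Suc k)"])
          show "\<And>a. p k \<le> a \<Longrightarrow> a \<le> p (Suc k) \<Longrightarrow> Xi a a = 0" using diag rng by auto
          show "\<And>a b da. p k \<le> a \<Longrightarrow> a \<le> b \<Longrightarrow> b \<le> da \<Longrightarrow> da \<le> p (Suc k) \<Longrightarrow>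
            \<bar>Xi a da - Xi a b - Xi b da\<bar> \<le> K1 * (da - a) powr th1 + K2 * (da - a) powr th2 + K3 * (da - a) powr th3"
          proof -
            fix a b da assume h: "p k \<le> a" "a \<le> b" "b \<le> da" "da \<le> p (Suc k)"
            have "da - a \<le> 1" using h P(2) k d(2) by force
            then show "\<bar>Xi a da - Xi a b - Xi b da\<bar> \<le> K1 * (da - a) powr th1 + K2 * (da - a) powr th2 + K3 * (da - a) powr th3"
              using dXi h rng by auto
          qed
        qed (use K thg A in auto)
        define l where "l = Max A - Min A"
        have l0: "0 \<le> l" using A by (simp add: l_def)
        have "Max A \<le> p (Suc k)" "p k \<le> Min A" using A by auto
        then have lL: "l \<le> p (Suc k) - p k" by (simp add: l_def)
        have ld: "l \<le> d" using lL P(2) k by auto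
        have "cst th1 * K1 * l powr th1 + cst th2 * K2 * l powr th2 + cst th3 * K3 * l powr th3
           \<le> cst th1 * K1 * (l * d powr mu) + cst th2 * K2 * (l * d powr mu) + cst th3 * K3 * (l * d powr mu)"
          using cst_pos[OF thg(1)] cst_pos[OF thg(2)] cst_pos[OF thg(3)] K powsmall[OF l0 ld d(2) mu] th
          by (intro add_mono mult_left_mono) auto
        also have "\<dots> = S * l * d powr mu" by (simp add: S_def algebra_simps)
        also have "\<dots> \<le> S * (p (Suc k) - p k) * d powr mu"
          using S0 lL by (intro mult_right_mono mult_left_mono) auto
        finally show "\<bar>ssum Xi A - Xi (Min A) (Max A)\<bar> \<le> S * (p (Suc k) - p k) * d powr mu"
          using sw by (simp add: l_def)
      qed
      also have "\<dots> = S * d powr mu * (\<Sum>k<n. p (Suc k) - p k)"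
        by (simp add: sum_distrib_left algebra_simps)
      also have "\<dots> = (2*pi*S) * d powr mu" by (simp add: sum_lessThan_telescope p0 pn)
      also have "\<dots> \<le> eps" by (rule d(3))
      finally show ?thesis .
    qed
    then show ?thesis using d by blast
  qed
  have two: "\<exists>d>0. \<forall>n p m q. partition n p \<and> (\<forall>k<n. p (Suc k) - p k \<le> d) \<and>
      partition m q \<and> (\<forall>k<m. q (Suc k) - q k \<le> d) \<longrightarrow> \<bar>rs n p - rs m q\<bar> \<le> 2 * eps"
    if eps: "0 < eps" for eps
  proof -
    obtain d where d: "d > 0" and dd: "\<And>n p B. partition n p \<Longrightarrow> (\<forall>k<n. p (Suc k) - p k \<le> d) \<Longrightarrow>
      finite B \<Longrightarrow> p ` {0..n} \<subseteq> B \<Longrightarrow> B \<subseteq> {0..2*pi} \<Longrightarrow> \<bar>ssum Xi B - rs n p\<bar> \<le> eps"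
      using close[OF eps] by blast
    have "\<bar>rs n p - rs m q\<bar> \<le> 2 * eps" if P: "partition n p" "\<forall>k<n. p (Suc k) - p k \<le> d"
      "partition m q" "\<forall>k<m. q (Suc k) - q k \<le> d" for n p m q
    proof -
      define B where "B = p ` {0..n} \<union> q ` {0..m}"
      have B: "finite B" "p ` {0..n} \<subseteq> B" "q ` {0..m} \<subseteq> B" "B \<subseteq> {0..2*pi}"
        using partition_range[OF P(1)] partition_range[OF P(3)] by (auto simp: B_def)
      have "\<bar>ssum Xi B - rs n p\<bar> \<le> eps" using dd[OF P(1,2) B(1,2,4)] .
      moreover have "\<bar>ssum Xi B - rs m q\<bar> \<le> eps" using dd[OF P(3,4) B(1,3,4)] .
      ultimately show ?thesis by linarith
    qed
    then show ?thesis using d by blast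
  qed
  define u where "u j = rs (Suc j) (up j)" for j
  have ufine: "\<exists>M. \<forall>i\<ge>M. \<forall>j\<ge>M. \<bar>u i - u j\<bar> \<le> 2 * eps" if eps0: "0 < eps" for eps
  proof -
    obtain d where d: "d > 0" and dd: "\<And>n p m q. partition n p \<Longrightarrow> (\<forall>k<n. p (Suc k) - p k \<le> d) \<Longrightarrow>
      partition m q \<Longrightarrow> (\<forall>k<m. q (Suc k) - q k \<le> d) \<Longrightarrow> \<bar>rs n p - rs m q\<bar> \<le> 2 * eps"
      using two[OF eps0] by blast
    obtain M where M: "\<And>j. j \<ge> M \<Longrightarrow> 2*pi / real (Suc j) \<le> d" using uniform_fine[OF d] by blast
    have "\<bar>u i - u j\<bar> \<le> 2 * eps" if "i \<ge> M" "j \<ge> M" for i j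
      unfolding u_def using dd[OF up_partition _ up_partition] M[OF that(1)] M[OF that(2)]
      by (simp add: up_step)
    then show ?thesis by blast
  qed
  have "Cauchy u"
  proof (rule CauchyI)
    fix e :: real assume e: "0 < e"
    obtain M where "\<forall>i\<ge>M. \<forall>j\<ge>M. \<bar>u i - u j\<bar> \<le> 2 * (e/4)" using ufine[of "e/4"] e by auto
    then have "\<forall>m\<ge>M. \<forall>n\<ge>M. norm (u m - u n) < e" using e by force
    then show "\<exists>M. \<forall>m\<ge>M. \<forall>n\<ge>M. norm (u m - u n) < e" by blast
  qed
  then obtain I where I: "u \<longlonglongrightarrow> I" using Cauchy_convergent_iff convergent_def by blast
  have conv: "\<forall>\<epsilon>>0. \<exists>\<delta>>0. \<forall>n p. partition n p \<and> mesh n p < \<delta> \<longrightarrow> \<bar>rs n p - I\<bar> < \<epsilon>"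
  proof (intro allI impI)
    fix eps :: real assume eps: "0 < eps"
    obtain d where d: "d > 0" and dd: "\<And>n p m q. partition n p \<Longrightarrow> (\<forall>k<n. p (Suc k) - p k \<le> d) \<Longrightarrow>
      partition m q \<Longrightarrow> (\<forall>k<m. q (Suc k) - q k \<le> d) \<Longrightarrow> \<bar>rs n p - rs m q\<bar> \<le> 2 * (eps/4)"
      using two[of "eps/4"] eps by auto
    obtain M where M: "\<And>j. j \<ge> M \<Longrightarrow> 2*pi / real (Suc j) \<le> d" using uniform_fine[OF d] by blast
    have "\<bar>rs n p - I\<bar> < eps" if P: "partition n p" "mesh n p < d" for n p
    proof -
      have st: "\<forall>k<n. p (Suc k) - p k \<le> d" using mesh_ge P(2) by (metis less_imp_le order_trans)
      have lim: "(\<lambda>j. \<bar>rs n p - u j\<bar>) \<longlonglongrightarrow> \<bar>rs n p - I\<bar>" by (intro tendsto_intros I)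
      have "\<forall>j\<ge>M. \<bar>rs n p - u j\<bar> \<le> 2 * (eps/4)"
        unfolding u_def using dd[OF P(1) st up_partition] M by (simp add: up_step)
      then have "\<bar>rs n p - I\<bar> \<le> 2 * (eps/4)" using LIMSEQ_le_const2[OF lim] by blast
      then show ?thesis using eps by simp
    qed
    then show "\<exists>\<delta>>0. \<forall>n p. partition n p \<and> mesh n p < \<delta> \<longrightarrow> \<bar>rs n p - I\<bar> < eps" using d by blast
  qed
  have bound: "\<bar>I\<bar> \<le> \<bar>rs N e\<bar> + (\<Sum>k<N. g k)"
  proof (rule field_le_epsilon)
    fix eps :: real assume eps: "0 < eps"
    obtain d where d: "d > 0" and dd: "\<And>n p B. partition n p \<Longrightarrow> (\<forall>k<n. p (Suc k) - p k \<le> d) \<Longrightarrow>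
      finite B \<Longrightarrow> p ` {0..n} \<subseteq> B \<Longrightarrow> B \<subseteq> {0..2*pi} \<Longrightarrow> \<bar>ssum Xi B - rs n p\<bar> \<le> eps/2"
      using close[of "eps/2"] eps by auto
    obtain M where M: "\<And>j. j \<ge> M \<Longrightarrow> 2*pi / real (Suc j) \<le> d" using uniform_fine[OF d] by blast
    obtain M2 where M2: "\<And>j. j \<ge> M2 \<Longrightarrow> norm (u j - I) < eps/2" using LIMSEQ_D[OF I, of "eps/2"] eps by auto
    define j where "j = max M M2"
    define B where "B = up j ` {0..Suc j} \<union> e ` {0..N}"
    have B: "finite B" "up j ` {0..Suc j} \<subseteq> B" "e ` {0..N} \<subseteq> B" "B \<subseteq> {0..2*pi}"
      using partition_range[OF up_partition[of j]] partition_range[OF E] by (auto simp: B_def)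
    have b1: "\<bar>ssum Xi B - u j\<bar> \<le> eps/2"
      unfolding u_def using dd[OF up_partition _ B(1,2,4)] M[of j] by (simp add: up_step j_def)
    have b2: "\<bar>u j - I\<bar> < eps/2" using M2[of j] by (simp add: j_def)
    have inc: "\<forall>k<N. e k < e (Suc k)" and e0: "e 0 = 0" and eN: "e N = 2*pi"
      using E unfolding partition_def by auto
    have b3: "\<bar>ssum Xi B - rs N e\<bar> \<le> (\<Sum>k<N. g k)"
      unfolding rs_def by (rule refine_bound[OF inc B(1,3)]) (use B(4) e0 eN g in auto)
    show "\<bar>I\<bar> \<le> \<bar>rs N e\<bar> + (\<Sum>k<N. g k) + eps" using b1 b2 b3 by linarith
  qed
  show ?thesis using conv bound unfolding rs_def by blast
qed



lemma pi2_gt1: "1 < 2*pi" using pi_gt3 by simp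

lemma hpairs_mem: "(x, y) \<in> hpairs \<longleftrightarrow> 0 \<le> x \<and> x < 2*pi \<and> x < y \<and> y < x + 2*pi"
  by (simp add: hpairs_def)

lemma holder2:
  assumes "hfin2 al G" "0 \<le> x" "x < 2*pi" "x < y" "y < x + 2*pi"
  shows "\<bar>G x y\<bar> \<le> hnorm2 al G * (y - x) powr al"
proof -
  have "(x, y) \<in> hpairs" using assms by (simp add: hpairs_def)
  then have "\<bar>G x y\<bar> / (y - x) powr al \<in> hquot2 al G"
    unfolding hquot2_def by (rule rev_image_eqI) simp
  then have "\<bar>G x y\<bar> / (y - x) powr al \<le> hnorm2 al G"
    unfolding hnorm2_def using assms(1) by (simp add: hfin2_def cSup_upper)
  moreover have "0 < (y - x) powr al" using assms by simp
  ultimately show ?thesis by (simp add: divide_le_eq)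
qed

lemma hnorm2_nonneg:
  assumes "hfin2 al G" shows "0 \<le> hnorm2 al G"
proof -
  have "(0, 1) \<in> hpairs" using pi2_gt1 by (simp add: hpairs_def)
  then have "\<bar>G 0 1\<bar> / (1 - 0) powr al \<in> hquot2 al G"
    unfolding hquot2_def by (rule rev_image_eqI) simp
  then have "\<bar>G 0 1\<bar> / (1 - 0) powr al \<le> hnorm2 al G"
    unfolding hnorm2_def using assms by (simp add: hfin2_def cSup_upper)
  moreover have "0 \<le> \<bar>G 0 1\<bar> / (1 - 0) powr al" by simp
  ultimately show ?thesis by linarith
qed

lemma holder1:
  assumes "hfin al X" "0 \<le> x" "x < 2*pi" "x < y" "y < x + 2*pi"
  shows "\<bar>incr X x y\<bar> \<le> hnorm al X * (y - x) powr al"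
  using holder2[of al "incr X"] assms by (simp add: hfin_def hnorm_def)

lemma hnorm_nonneg: "hfin al X \<Longrightarrow> 0 \<le> hnorm al X"
  unfolding hfin_def hnorm_def by (rule hnorm2_nonneg)

lemma sup_bound:
  assumes "supfin Y" "0 \<le> x" "x < 2*pi" shows "\<bar>Y x\<bar> \<le> supnorm Y"
  unfolding supnorm_def
proof (rule cSup_upper)
  show "\<bar>Y x\<bar> \<in> (\<lambda>x. \<bar>Y x\<bar>) ` {0..<2*pi}" using assms by auto
  show "bdd_above ((\<lambda>x. \<bar>Y x\<bar>) ` {0..<2*pi})" using assms(1) by (simp add: supfin_def)
qed

lemma supnorm_nonneg: "supfin Y \<Longrightarrow> 0 \<le> supnorm Y"
proof -
  assume "supfin Y"
  then have "\<bar>Y 0\<bar> \<le> supnorm Y" using sup_bound[of Y 0] by simp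
  then show ?thesis by linarith
qed

lemma Y_bound:
  assumes "circ_periodic Y" "hfin al Y" "0 \<le> b" "b \<le> 2*pi" "0 < al"
  shows "\<bar>Y b\<bar> \<le> \<bar>Y 0\<bar> + hnorm al Y * b powr al"
proof -
  have h0: "0 \<le> hnorm al Y * b powr al" using hnorm_nonneg[OF assms(2)] by simp
  consider "b = 0" | "0 < b \<and> b < 2*pi" | "b = 2*pi" using assms by linarith
  then show ?thesis
  proof cases
    case 1 then show ?thesis using h0 by simp
  next
    case 2
    have "\<bar>incr Y 0 b\<bar> \<le> hnorm al Y * (b - 0) powr al"
      using holder1[OF assms(2), of 0 b] 2 by simp
    then show ?thesis by (simp add: incr_def)
  next
    case 3
    have "Y (0 + 2*pi) = Y 0" using assms(1) unfolding circ_periodic_def by blast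
    then show ?thesis using 3 h0 by simp
  qed
qed

lemma lip:
  fixes f :: "real \<Rightarrow> real"
  assumes "\<And>x. (f has_real_derivative deriv f x) (at x)"
    "\<And>x. lo \<le> x \<Longrightarrow> x \<le> hi \<Longrightarrow> \<bar>deriv f x\<bar> \<le> M" "lo \<le> u" "u \<le> v" "v \<le> hi"
  shows "\<bar>f v - f u\<bar> \<le> M * (v - u)"
proof (cases "u = v")
  case True then show ?thesis by simp
next
  case False
  then have uv: "u < v" using assms by simp
  obtain z where z: "u < z" "z < v" "f v - f u = (v - u) * deriv f z"
    using MVT2[OF uv, of f "deriv f"] assms(1) by blast
  have "\<bar>deriv f z\<bar> \<le> M" using assms z by simp
  then show ?thesis using z uv by (simp add: abs_mult mult.commute mult_left_mono)
qed

lemma abs3: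
  fixes u v w U V W :: real
  assumes "\<bar>u\<bar> \<le> U" "\<bar>v\<bar> \<le> V" "\<bar>w\<bar> \<le> W"
  shows "\<bar>u * v * w\<bar> \<le> U * V * W"
proof -
  have U: "0 \<le> U" "0 \<le> V" using assms(1,2) abs_ge_zero[of u] abs_ge_zero[of v] by linarith+
  have h1: "\<bar>u\<bar> * \<bar>v\<bar> \<le> U * V" by (rule mult_mono[OF assms(1,2) U(1) abs_ge_zero])
  have h0: "0 \<le> U * V" using U by simp
  have "\<bar>u\<bar> * \<bar>v\<bar> * \<bar>w\<bar> \<le> U * V * W" by (rule mult_mono[OF h1 assms(3) h0 abs_ge_zero])
  then show ?thesis by (simp add: abs_mult)
qed



lemma C1_facts:
  assumes "C1 f"
  shows "\<And>x. (f has_real_derivative deriv f x) (at x)" "\<And>x. isCont f x" "\<And>x. isCont (deriv f) x"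
proof -
  show d: "\<And>x. (f has_real_derivative deriv f x) (at x)"
    using assms DERIV_deriv_iff_real_differentiable unfolding C1_def by blast
  show "\<And>x. isCont f x" using d DERIV_isCont by blast
  show "\<And>x. isCont (deriv f) x" using assms unfolding C1_def
    by (simp add: continuous_on_eq_continuous_at)
qed

definition msup :: "(real \<Rightarrow> real) \<Rightarrow> real \<Rightarrow> real" where
  "msup f r = Sup ((\<lambda>t. \<bar>f (r + t)\<bar> + \<bar>deriv f (r + t)\<bar>) ` {0..1})"

lemma msup_bdd:
  assumes "C1 f"
  shows "bdd_above ((\<lambda>t. \<bar>f (r + t)\<bar> + \<bar>deriv f (r + t)\<bar>) ` {0..1})"
proof -
  note c = C1_facts[OF assms]
  have "continuous_on {0..1} (\<lambda>t. \<bar>f (r + t)\<bar> + \<bar>deriv f (r + t)\<bar>)"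
  proof (intro continuous_at_imp_continuous_on ballI)
    fix t :: real
    have "isCont (\<lambda>t. f (r + t)) t" by (rule isCont_o2[OF _ c(2)]) (intro continuous_intros)
    moreover have "isCont (\<lambda>t. deriv f (r + t)) t" by (rule isCont_o2[OF _ c(3)]) (intro continuous_intros)
    ultimately show "isCont (\<lambda>t. \<bar>f (r + t)\<bar> + \<bar>deriv f (r + t)\<bar>) t" by (intro continuous_intros)
  qed
  then have "compact ((\<lambda>t. \<bar>f (r + t)\<bar> + \<bar>deriv f (r + t)\<bar>) ` {0..1})"
    by (intro compact_continuous_image) auto
  then show ?thesis by (intro bounded_imp_bdd_above compact_imp_bounded)
qed

lemma msup_bound:
  assumes "C1 f" "r \<le> x" "x \<le> r + 1"
  shows "\<bar>f x\<bar> \<le> msup f r" "\<bar>deriv f x\<bar> \<le> msup f r"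
proof -
  have "\<bar>f (r + (x - r))\<bar> + \<bar>deriv f (r + (x - r))\<bar> \<le> msup f r"
    unfolding msup_def
  proof (rule cSup_upper)
    show "\<bar>f (r + (x - r))\<bar> + \<bar>deriv f (r + (x - r))\<bar> \<in> (\<lambda>t. \<bar>f (r + t)\<bar> + \<bar>deriv f (r + t)\<bar>) ` {0..1}"
      using assms by (intro imageI) auto
  qed (rule msup_bdd[OF assms(1)])
  then show "\<bar>f x\<bar> \<le> msup f r" "\<bar>deriv f x\<bar> \<le> msup f r" by auto
qed

lemma msup_nonneg: "C1 f \<Longrightarrow> 0 \<le> msup f r"
  using msup_bound(1)[of f r r] by fastforce

lemma tseq_eq: "tseq f (int k) = sqrt (1 + real k) * msup f (real k)"
  by (simp add: tseq_def msup_def)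

lemma tseq_nonneg: "C1 f \<Longrightarrow> 0 \<le> tseq f n"
  unfolding tseq_def using msup_nonneg[of f "real_of_int n"] by (simp add: msup_def)

lemma tsum_le:
  assumes "C1 f" "triple_finite f"
  shows "(\<Sum>k<N. tseq f (int k)) \<le> triple f"
proof -
  have "(\<Sum>k<N. tseq f (int k)) = sum (tseq f) (int ` {..<N})"
    by (simp add: sum.reindex)
  also have "\<dots> \<le> infsum (tseq f) UNIV"
    using assms tseq_nonneg[OF assms(1)] unfolding triple_finite_def
    by (intro finite_sum_le_infsum) auto
  finally show ?thesis by (simp add: triple_def)
qed

lemma glob_bound:
  fixes g :: "real \<Rightarrow> real"
  assumes "\<And>x. isCont g x"
  shows "\<exists>M\<ge>0. \<forall>x. lo \<le> x \<and> x \<le> hi \<longrightarrow> \<bar>g x\<bar> \<le> M"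
proof -
  have "continuous_on {lo..hi} g" by (intro continuous_at_imp_continuous_on ballI assms)
  then have "compact (g ` {lo..hi})" by (intro compact_continuous_image) auto
  then have "bounded (g ` {lo..hi})" by (rule compact_imp_bounded)
  then obtain M where "M > 0" "\<forall>y\<in>g ` {lo..hi}. norm y \<le> M" using bounded_pos by blast
  then show ?thesis by (intro exI[of _ M]) auto
qed

definition germ :: "(real \<Rightarrow> real) \<Rightarrow> (real \<Rightarrow> real) \<Rightarrow> (real \<Rightarrow> real) \<Rightarrow> (real \<Rightarrow> real)
    \<Rightarrow> (real \<Rightarrow> real \<Rightarrow> real) \<Rightarrow> real \<Rightarrow> real \<Rightarrow> real" where
  "germ F Y Y' X XX a b = (if a < b then F a * Y a * incr X a b + F a * Y' a * XX a b else 0)"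

lemma red2_simple:
  assumes "0 \<le> b" "b < 2*pi" shows "red2 G b d = G b d"
proof -
  have "\<lfloor>b / (2*pi)\<rfloor> = 0" using assms by (intro floor_unique) (auto simp: field_simps)
  then show ?thesis by (simp add: red2_def)
qed

lemma powr_comb:
  fixes l p q r :: real
  assumes "p + q = r" shows "l powr p * l powr q = l powr r"
  using assms powr_add[of l p q] by simp

lemma germ_delta:
  fixes kap :: real
  assumes kap: "0 < kap" "kap < 1/2"
  and rp: "rough_path X XX"
  and hf: "hfin (1/2 - kap) X" "hfin2 (1 - 2*kap) XX" "hfin (3*kap) Y'" "supfin Y'"
          "hfin2 (1/2 + 2*kap) (remainder Y Y' X)"
  and lohi: "0 \<le> lo" "hi \<le> 2*pi"
  and MF: "\<And>x. lo \<le> x \<Longrightarrow> x \<le> hi \<Longrightarrow> \<bar>F x\<bar> \<le> MF"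
  and LF: "\<And>a b. lo \<le> a \<Longrightarrow> a \<le> b \<Longrightarrow> b \<le> hi \<Longrightarrow> \<bar>F b - F a\<bar> \<le> LF * (b - a)"
  and MY: "\<And>b. lo \<le> b \<Longrightarrow> b \<le> hi \<Longrightarrow> \<bar>Y b\<bar> \<le> MY"
  and M0: "0 \<le> MF" "0 \<le> LF" "0 \<le> MY"
  and abd: "lo \<le> a" "a \<le> b" "b \<le> d" "d \<le> hi" "d - a \<le> 1"
  shows "\<bar>germ F Y Y' X XX a d - germ F Y Y' X XX a b - germ F Y Y' X XX b d\<bar> \<le>
     MF * (hnorm2 (1/2 + 2*kap) (remainder Y Y' X) * hnorm (1/2 - kap) X
           + hnorm (3*kap) Y' * hnorm2 (1 - 2*kap) XX) * (d - a) powr (1 + kap)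
     + LF * MY * hnorm (1/2 - kap) X * (d - a) powr (3/2 - kap)
     + LF * supnorm Y' * hnorm2 (1 - 2*kap) XX * (d - a) powr (2 - 2*kap)"
    (is "?L \<le> ?R")
proof -
  define hr where "hr = hnorm2 (1/2 + 2*kap) (remainder Y Y' X)"
  define hx where "hx = hnorm (1/2 - kap) X"
  define hy' where "hy' = hnorm (3*kap) Y'"
  define hxx where "hxx = hnorm2 (1 - 2*kap) XX"
  define sy' where "sy' = supnorm Y'"
  have nn: "0 \<le> hr" "0 \<le> hx" "0 \<le> hy'" "0 \<le> hxx" "0 \<le> sy'"
    using hf hnorm2_nonneg hnorm_nonneg supnorm_nonneg
    by (auto simp: hr_def hx_def hy'_def hxx_def sy'_def)
  define l where "l = d - a"
  have l0: "0 \<le> l" using abd by (simp add: l_def)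
  have R0: "0 \<le> ?R"
    using nn M0 l0 unfolding hr_def[symmetric] hx_def[symmetric] hy'_def[symmetric] hxx_def[symmetric]
      sy'_def[symmetric] l_def[symmetric]
    by (intro add_nonneg_nonneg mult_nonneg_nonneg) auto
  show ?thesis
  proof (cases "a < b \<and> b < d")
    case False
    then have "a = b \<or> b = d" using abd by auto
    then have "?L = 0" by (auto simp: germ_def)
    then show ?thesis using R0 by simp
  next
    case True
    then have ab: "a < b" and bd: "b < d" by auto
    have a0: "0 \<le> a" and b2: "b < 2*pi" and d2: "d \<le> 2*pi" using abd lohi bd by auto
    have H: "\<forall>x y z. 0 \<le> x \<and> x < 2*pi \<and> x \<le> y \<and> y \<le> z \<and> z < x + 2*pi \<longrightarrow>
        XX x z - XX x y - red2 XX y z = incr X x y * incr X y z"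
      using rp unfolding rough_path_def by blast
    have "a < 2*pi" "d < a + 2*pi" using abd ab b2 pi2_gt1 by auto
    then have chen0: "XX a d - XX a b - red2 XX b d = incr X a b * incr X b d"
      using H a0 ab bd by auto
    have chen: "XX a d = XX a b + XX b d + incr X a b * incr X b d"
      using chen0 red2_simple[of b XX d] a0 ab b2 by simp
    have eq: "germ F Y Y' X XX a d - germ F Y Y' X XX a b - germ F Y Y' X XX b d = - ((F a * remainder Y Y' X a b) * incr X b d) - (((F b - F a) * Y b) * incr X b d)
        - ((F a * incr Y' a b) * XX b d) - (((F b - F a) * Y' b) * XX b d)"
      using ab bd unfolding germ_def
      by (simp add: chen incr_def remainder_def algebra_simps)
    have pm: "(b - a) powr e \<le> l powr e" "(d - b) powr e \<le> l powr e" if "0 \<le> e" for e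
      using that abd True by (auto intro!: powr_mono2 simp: l_def)
    have ba: "b - a \<le> l" using abd by (simp add: l_def)
    have a2: "a < 2*pi" "b < a + 2*pi" "d < b + 2*pi" using a0 ab b2 bd d2 by auto
    have ex: "0 \<le> 1/2 + 2*kap" "0 \<le> 1/2 - kap" "0 \<le> 3*kap" "0 \<le> 1 - 2*kap" using kap by auto
    have hR0: "\<bar>remainder Y Y' X a b\<bar> \<le> hr * (b - a) powr (1/2 + 2*kap)"
      unfolding hr_def by (rule holder2[OF hf(5) a0 a2(1) ab a2(2)])
    have hR: "\<bar>remainder Y Y' X a b\<bar> \<le> hr * l powr (1/2 + 2*kap)"
      using hR0 mult_left_mono[OF pm(1)[OF ex(1)] nn(1)] by linarith
    have hX0: "\<bar>incr X b d\<bar> \<le> hx * (d - b) powr (1/2 - kap)"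
      unfolding hx_def using a0 ab by (intro holder1[OF hf(1)]) (use b2 bd a2 in auto)
    have hX: "\<bar>incr X b d\<bar> \<le> hx * l powr (1/2 - kap)"
      using hX0 mult_left_mono[OF pm(2)[OF ex(2)] nn(2)] by linarith
    have hY0: "\<bar>incr Y' a b\<bar> \<le> hy' * (b - a) powr (3*kap)"
      unfolding hy'_def by (rule holder1[OF hf(3) a0 a2(1) ab a2(2)])
    have hY': "\<bar>incr Y' a b\<bar> \<le> hy' * l powr (3*kap)"
      using hY0 mult_left_mono[OF pm(1)[OF ex(3)] nn(3)] by linarith
    have hXX0: "\<bar>XX b d\<bar> \<le> hxx * (d - b) powr (1 - 2*kap)"
      unfolding hxx_def using a0 ab by (intro holder2[OF hf(2)]) (use b2 bd a2 in auto)
    have hXX: "\<bar>XX b d\<bar> \<le> hxx * l powr (1 - 2*kap)"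
      using hXX0 mult_left_mono[OF pm(2)[OF ex(4)] nn(4)] by linarith
    have sY': "\<bar>Y' b\<bar> \<le> sy'" using sup_bound[OF hf(4)] a0 ab b2 by (simp add: sy'_def)
    have fa: "\<bar>F a\<bar> \<le> MF" using MF abd by simp
    have fba: "\<bar>F b - F a\<bar> \<le> LF * l"
      using LF[of a b] abd mult_left_mono[OF ba M0(2)] by simp
    have yb: "\<bar>Y b\<bar> \<le> MY" using MY abd by simp
    have t1: "\<bar>F a * remainder Y Y' X a b * incr X b d\<bar> \<le> MF * (hr * l powr (1/2 + 2*kap)) * (hx * l powr (1/2 - kap))"
      by (rule abs3[OF fa hR hX])
    have t2: "\<bar>(F b - F a) * Y b * incr X b d\<bar> \<le> (LF * l) * MY * (hx * l powr (1/2 - kap))"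
      by (rule abs3[OF fba yb hX])
    have t3: "\<bar>F a * incr Y' a b * XX b d\<bar> \<le> MF * (hy' * l powr (3*kap)) * (hxx * l powr (1 - 2*kap))"
      by (rule abs3[OF fa hY' hXX])
    have t4: "\<bar>(F b - F a) * Y' b * XX b d\<bar> \<le> (LF * l) * sy' * (hxx * l powr (1 - 2*kap))"
      by (rule abs3[OF fba sY' hXX])
    have e1: "l powr (1/2 + 2*kap) * l powr (1/2 - kap) = l powr (1 + kap)" by (rule powr_comb) simp
    have e3: "l powr (3*kap) * l powr (1 - 2*kap) = l powr (1 + kap)" by (rule powr_comb) simp
    have e2: "l * l powr (1/2 - kap) = l powr (3/2 - kap)"
      using powr_mult_base[OF l0, of "1/2 - kap"] by simp
    have e4: "l * l powr (1 - 2*kap) = l powr (2 - 2*kap)"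
      using powr_mult_base[OF l0, of "1 - 2*kap"] by simp
    have "?L \<le> MF * (hr * l powr (1/2 + 2*kap)) * (hx * l powr (1/2 - kap))
       + (LF * l) * MY * (hx * l powr (1/2 - kap))
       + MF * (hy' * l powr (3*kap)) * (hxx * l powr (1 - 2*kap))
       + (LF * l) * sy' * (hxx * l powr (1 - 2*kap))"
    proof -
      have "?L \<le> \<bar>F a * remainder Y Y' X a b * incr X b d\<bar> + \<bar>(F b - F a) * Y b * incr X b d\<bar>
          + \<bar>F a * incr Y' a b * XX b d\<bar> + \<bar>(F b - F a) * Y' b * XX b d\<bar>"
        unfolding eq by arith
      then show ?thesis using t1 t2 t3 t4 by linarith
    qed
    also have "\<dots> = MF * (hr * hx + hy' * hxx) * l powr (1 + kap)
       + LF * MY * hx * l powr (3/2 - kap) + LF * sy' * hxx * l powr (2 - 2*kap)"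
    proof -
      have A1: "MF * (hr * l powr (1/2 + 2*kap)) * (hx * l powr (1/2 - kap)) = MF * hr * hx * l powr (1 + kap)"
        unfolding e1[symmetric] by (simp add: algebra_simps)
      have A3: "MF * (hy' * l powr (3*kap)) * (hxx * l powr (1 - 2*kap)) = MF * hy' * hxx * l powr (1 + kap)"
        unfolding e3[symmetric] by (simp add: algebra_simps)
      have A2: "(LF * l) * MY * (hx * l powr (1/2 - kap)) = LF * MY * hx * l powr (3/2 - kap)"
        unfolding e2[symmetric] by (simp add: algebra_simps)
      have A4: "(LF * l) * sy' * (hxx * l powr (1 - 2*kap)) = LF * sy' * hxx * l powr (2 - 2*kap)"
        unfolding e4[symmetric] by (simp add: algebra_simps)
      show ?thesis unfolding A1 A2 A3 A4 by (simp add: algebra_simps)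
    qed
    finally show ?thesis by (simp add: hr_def hx_def hy'_def hxx_def sy'_def l_def)
  qed
qed



lemma Egrid:
  fixes L :: real
  assumes L: "1 \<le> L"
  shows "k < nat \<lceil>2*pi*L\<rceil> \<Longrightarrow> real k / L < 2*pi"
    and "partition (nat \<lceil>2*pi*L\<rceil>) (\<lambda>k. min (real k / L) (2*pi))"
proof -
  define z where "z = 2*pi*L"
  have z0: "0 < z" using L by (simp add: z_def)
  have c: "of_int \<lceil>z\<rceil> - 1 < z" "z \<le> of_int \<lceil>z\<rceil>" using ceiling_correct by auto
  have pos: "0 < \<lceil>z\<rceil>" using c(2) z0 by linarith
  have RN: "real (nat \<lceil>z\<rceil>) = of_int \<lceil>z\<rceil>" using pos by simp
  have L0: "0 < L" using L by simp
  show k: "real k / L < 2*pi" if "k < nat \<lceil>2*pi*L\<rceil>" for k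
  proof -
    have "real k + 1 \<le> real (nat \<lceil>z\<rceil>)" using that by (simp add: z_def)
    then have "real k < z" using RN c by linarith
    then show ?thesis using L0 by (simp add: z_def divide_less_eq mult.commute)
  qed
  show "partition (nat \<lceil>2*pi*L\<rceil>) (\<lambda>k. min (real k / L) (2*pi))"
    unfolding partition_def
  proof (intro conjI allI impI)
    have "0 < nat \<lceil>z\<rceil>" using pos by (simp only: zero_less_nat_eq)
    then show "1 \<le> nat \<lceil>2*pi*L\<rceil>" unfolding z_def by linarith
    show "min (real 0 / L) (2*pi) = 0" by simp
    have "2*pi \<le> real (nat \<lceil>2*pi*L\<rceil>) / L"
      using RN c(2) L0 by (simp add: z_def le_divide_eq mult.commute)
    then show "min (real (nat \<lceil>2*pi*L\<rceil>) / L) (2*pi) = 2*pi" by simp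
    fix k assume kN: "k < nat \<lceil>2*pi*L\<rceil>"
    have "real k / L < real (Suc k) / L" using L0 by (simp add: divide_strict_right_mono)
    then show "min (real k / L) (2*pi) < min (real (Suc k) / L) (2*pi)" using k[OF kN] by simp
  qed
qed

lemma final_arith:
  fixes m y0 hx hy hxx hr hy' sy' cn L1 L2 c1 c2 c3 ka k1a r Xv gv :: real
  assumes nn: "0 \<le> m" "0 \<le> y0" "0 \<le> hx" "0 \<le> hy" "0 \<le> hxx" "0 \<le> hr" "0 \<le> hy'" "0 \<le> sy'"
    "0 \<le> L1" "0 \<le> L2" "0 \<le> c1" "0 \<le> c2" "0 \<le> c3" "0 \<le> ka" "0 \<le> k1a"
  and r: "ka \<le> r" "k1a \<le> r" "1 \<le> r" and cn: "cn = hy' + sy'"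
  and X: "Xv \<le> m * (y0 + hy * ka * L1) * hx * L1 + m * sy' * hxx * L2"
  and g: "gv \<le> c1 * m * (hr * hx + hy' * hxx) * L2 + c2 * m * y0 * hx * L1
             + c2 * m * hy * k1a * hx * L2 + c3 * m * sy' * hxx * L2"
  and LL: "L1 * L1 = L2"
  shows "Xv + gv \<le> (1 + c1 + c2 + c3) * (r * m) * (L1 * y0 * hx + L2 * (hy * hx + hxx * cn + hr * hx))"
proof -
  define D where "D = 1 + c1 + c2 + c3"
  have D1: "1 + c2 \<le> D" "c1 \<le> D" "1 + c1 + c3 \<le> D" using nn by (auto simp: D_def)
  have Dr: "0 \<le> D" using nn by (simp add: D_def)
  have G1: "(m * y0 * hx * L1) * (1 + c2) \<le> (m * y0 * hx * L1) * (D * r)"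
  proof (rule mult_left_mono)
    have "1 + c2 \<le> D * 1" using D1 by simp
    also have "\<dots> \<le> D * r" using Dr r by (intro mult_left_mono) auto
    finally show "1 + c2 \<le> D * r" .
  qed (use nn in auto)
  have G2: "(m * hy * hx * L2) * (ka + c2 * k1a) \<le> (m * hy * hx * L2) * (D * r)"
  proof (rule mult_left_mono)
    have "ka + c2 * k1a \<le> r + c2 * r" using r nn by (intro add_mono mult_left_mono) auto
    also have "\<dots> = (1 + c2) * r" by (simp add: algebra_simps)
    also have "\<dots> \<le> D * r" using D1 r by (intro mult_right_mono) auto
    finally show "ka + c2 * k1a \<le> D * r" .
  qed (use nn in auto)
  have G3: "(m * hxx * L2) * (sy' + c1 * hy' + c3 * sy') \<le> (m * hxx * L2) * (D * r * cn)"
  proof (rule mult_left_mono)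
    have "sy' + c1 * hy' + c3 * sy' \<le> cn + c1 * cn + c3 * cn"
      using nn cn by (intro add_mono mult_left_mono) auto
    also have "\<dots> = (1 + c1 + c3) * cn" by (simp add: algebra_simps)
    also have "\<dots> \<le> D * cn" using D1 nn cn by (intro mult_right_mono) auto
    also have "\<dots> \<le> D * r * cn"
    proof -
      have "D * cn * 1 \<le> D * cn * r" using Dr nn cn r by (intro mult_left_mono) auto
      then show ?thesis by (simp add: algebra_simps)
    qed
    finally show "sy' + c1 * hy' + c3 * sy' \<le> D * r * cn" .
  qed (use nn in auto)
  have G4: "(m * hr * hx * L2) * c1 \<le> (m * hr * hx * L2) * (D * r)"
  proof (rule mult_left_mono)
    have "c1 \<le> D * 1" using D1 by simp
    also have "\<dots> \<le> D * r" using Dr r by (intro mult_left_mono) auto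
    finally show "c1 \<le> D * r" .
  qed (use nn in auto)
  have "Xv + gv \<le> (m * y0 * hx * L1) * (1 + c2) + (m * hy * hx * L2) * (ka + c2 * k1a)
      + (m * hxx * L2) * (sy' + c1 * hy' + c3 * sy') + (m * hr * hx * L2) * c1"
  proof -
    have e: "m * (y0 + hy * ka * L1) * hx * L1 = m * y0 * hx * L1 + m * hy * hx * ka * L2"
      unfolding LL[symmetric] by (simp add: algebra_simps)
    have R: "(m * y0 * hx * L1) * (1 + c2) + (m * hy * hx * L2) * (ka + c2 * k1a)
      + (m * hxx * L2) * (sy' + c1 * hy' + c3 * sy') + (m * hr * hx * L2) * c1
      = (m * y0 * hx * L1 + m * hy * hx * ka * L2 + m * sy' * hxx * L2)
      + (c1 * m * (hr * hx + hy' * hxx) * L2 + c2 * m * y0 * hx * L1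
             + c2 * m * hy * k1a * hx * L2 + c3 * m * sy' * hxx * L2)"
      by (simp add: algebra_simps)
    show ?thesis unfolding R using X g e by linarith
  qed
  also have "\<dots> \<le> (m * y0 * hx * L1) * (D * r) + (m * hy * hx * L2) * (D * r)
      + (m * hxx * L2) * (D * r * cn) + (m * hr * hx * L2) * (D * r)"
    using G1 G2 G3 G4 by linarith
  also have "\<dots> = D * (r * m) * (L1 * y0 * hx + L2 * (hy * hx + hxx * cn + hr * hx))"
    by (simp add: algebra_simps)
  finally show ?thesis by (simp add: D_def)
qed



lemma expo_facts:
  fixes lam kap :: real
  assumes lam: "1 \<le> lam" and kap: "0 < kap" "kap < 1/2"
  shows "(1/lam) powr (1/2 - kap) = lam powr (kap - 1/2)"
    and "(1/lam) powr (1 - 2*kap) = lam powr (2*kap - 1)"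
    and "(1/lam) powr (1 + kap) \<le> lam powr (2*kap - 1)"
    and "lam * (1/lam) powr (3/2 - kap) = lam powr (kap - 1/2)"
    and "lam * (1/lam) powr (2 - 2*kap) = lam powr (2*kap - 1)"
    and "lam powr (kap - 1/2) * lam powr (kap - 1/2) = lam powr (2*kap - 1)"
    and "\<And>x. 0 \<le> x \<Longrightarrow> (x / lam) powr (1/2 - kap) = x powr (1/2 - kap) * lam powr (kap - 1/2)"
proof -
  have l0: "0 < lam" using lam by simp
  have ilp: "(1/lam) powr x = lam powr (-x)" for x
    using l0 by (simp add: powr_divide powr_minus_divide)
  show "(1/lam) powr (1/2 - kap) = lam powr (kap - 1/2)" unfolding ilp by (simp add: algebra_simps)
  show "(1/lam) powr (1 - 2*kap) = lam powr (2*kap - 1)" unfolding ilp by (simp add: algebra_simps)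
  show "(1/lam) powr (1 + kap) \<le> lam powr (2*kap - 1)" unfolding ilp using lam kap
    by (intro powr_mono) auto
  have mb: "lam * lam powr y = lam powr (1 + y)" for y using powr_mult_base[of lam y] l0 by simp
  show "lam * (1/lam) powr (3/2 - kap) = lam powr (kap - 1/2)" unfolding ilp mb by (simp add: algebra_simps)
  show "lam * (1/lam) powr (2 - 2*kap) = lam powr (2*kap - 1)" unfolding ilp mb by (simp add: algebra_simps)
  show "lam powr (kap - 1/2) * lam powr (kap - 1/2) = lam powr (2*kap - 1)"
    by (rule powr_comb) simp
  fix x :: real assume x: "0 \<le> x"
  have "(x / lam) powr (1/2 - kap) = (x * (1/lam)) powr (1/2 - kap)" by simp
  also have "\<dots> = x powr (1/2 - kap) * (1/lam) powr (1/2 - kap)" by (rule powr_mult)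
  also have "(1/lam) powr (1/2 - kap) = lam powr (kap - 1/2)" unfolding ilp by (simp add: algebra_simps)
  finally show "(x / lam) powr (1/2 - kap) = x powr (1/2 - kap) * lam powr (kap - 1/2)" .
qed



lemma main_bound:
  fixes kap lam :: real and f X Y Y' :: "real \<Rightarrow> real" and XX :: "real \<Rightarrow> real \<Rightarrow> real"
  assumes kap: "0 < kap" "kap < 1/2"
  and Cf: "C1 f" and Tf: "triple_finite f" and lam: "lam \<ge> 1" and rp: "rough_path X XX"
  and pY: "circ_periodic Y" and pY': "circ_periodic Y'"
  and hf: "hfin (1/2 - kap) X" "hfin (1/2 - kap) Y" "hfin2 (1 - 2*kap) XX" "hfin (3*kap) Y'"
     "supfin Y'" "hfin2 (1/2 + 2*kap) (remainder Y Y' X)"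
  shows "\<exists>I. has_rough_integral (\<lambda>x. f (lam * x) * Y x) (\<lambda>x. f (lam * x) * Y' x) X XX I \<and>
     \<bar>I\<bar> \<le> (1 + cst (1 + kap) + cst (3/2 - kap) + cst (2 - 2*kap)) * triple f *
        (lam powr (kap - 1/2) * \<bar>Y 0\<bar> * hnorm (1/2 - kap) X + lam powr (2*kap - 1) * Kkappa kap Y Y' X XX)"
proof -
  define F where "F x = f (lam * x)" for x
  define Xi where "Xi = germ F Y Y' X XX"
  define al where "al = 1/2 - kap"
  define hx where "hx = hnorm (1/2 - kap) X"
  define hy where "hy = hnorm (1/2 - kap) Y"
  define hxx where "hxx = hnorm2 (1 - 2*kap) XX"
  define hr where "hr = hnorm2 (1/2 + 2*kap) (remainder Y Y' X)"
  define hy' where "hy' = hnorm (3*kap) Y'"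
  define sy' where "sy' = supnorm Y'"
  define y0 where "y0 = \<bar>Y 0\<bar>"
  define L1 where "L1 = lam powr (kap - 1/2)"
  define L2 where "L2 = lam powr (2*kap - 1)"
  define il where "il = 1 / lam"
  define N where "N = nat \<lceil>2*pi*lam\<rceil>"
  define e where "e k = min (real k / lam) (2*pi)" for k
  define c1 where "c1 = cst (1 + kap)"
  define c2 where "c2 = cst (3/2 - kap)"
  define c3 where "c3 = cst (2 - 2*kap)"
  define mu where "mu = min kap (1/2 - kap)"
  define m where "m k = msup f (real k)" for k :: nat
  have l0: "0 < lam" using lam by simp
  have nn: "0 \<le> hx" "0 \<le> hy" "0 \<le> hxx" "0 \<le> hr" "0 \<le> hy'" "0 \<le> sy'" "0 \<le> y0" "0 \<le> L1" "0 \<le> L2"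
    using hf hnorm2_nonneg hnorm_nonneg supnorm_nonneg
    by (auto simp: hx_def hy_def hxx_def hr_def hy'_def sy'_def y0_def L1_def L2_def)
  have cpos: "0 < c1" "0 < c2" "0 < c3" using kap cst_pos by (auto simp: c1_def c2_def c3_def)
  have mpos: "0 \<le> m k" for k using msup_nonneg[OF Cf] by (simp add: m_def)
  have mu0: "0 < mu" and th: "1 + mu \<le> 1 + kap" "1 + mu \<le> 3/2 - kap" "1 + mu \<le> 2 - 2*kap"
    using kap by (auto simp: mu_def)
  note ffacts = C1_facts[OF Cf]
  note EF = expo_facts[OF lam kap]
  have diag: "Xi a a = 0" for a by (simp add: Xi_def germ_def)
  obtain MF where MF: "MF \<ge> 0" "\<forall>x. 0 \<le> x \<and> x \<le> 2*pi*lam \<longrightarrow> \<bar>f x\<bar> \<le> MF"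
    using glob_bound[OF ffacts(2)] by blast
  obtain MD where MD: "MD \<ge> 0" "\<forall>x. 0 \<le> x \<and> x \<le> 2*pi*lam \<longrightarrow> \<bar>deriv f x\<bar> \<le> MD"
    using glob_bound[OF ffacts(3)] by blast
  have gdXi: "\<bar>Xi a d - Xi a b - Xi b d\<bar> \<le>
     MF * (hr * hx + hy' * hxx) * (d - a) powr (1 + kap)
     + (lam * MD) * (y0 + hy * (2*pi) powr al) * hx * (d - a) powr (3/2 - kap)
     + (lam * MD) * sy' * hxx * (d - a) powr (2 - 2*kap)"
    if abd: "0 \<le> a" "a \<le> b" "b \<le> d" "d \<le> 2*pi" "d - a \<le> 1" for a b d
  proof -
    have Fb: "\<bar>F x\<bar> \<le> MF" if "0 \<le> x" "x \<le> 2*pi" for x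
    proof -
      have "0 \<le> lam * x" "lam * x \<le> 2*pi*lam" using that l0 by (auto simp: mult.commute)
      then show ?thesis using MF(2) by (simp add: F_def)
    qed
    have Lb: "\<bar>F v - F u\<bar> \<le> (lam * MD) * (v - u)" if "0 \<le> u" "u \<le> v" "v \<le> 2*pi" for u v
    proof -
      have "0 \<le> lam * u" "lam * u \<le> lam * v" "lam * v \<le> 2*pi*lam" using that l0
        by (auto simp: mult.commute mult_left_mono)
      then have "\<bar>f (lam * v) - f (lam * u)\<bar> \<le> MD * (lam * v - lam * u)"
        using lip[OF ffacts(1), of 0 "2*pi*lam" MD "lam * u" "lam * v"] MD(2) by blast
      then show ?thesis by (simp add: F_def algebra_simps)
    qed
    have al0: "0 < al" using kap by (simp add: al_def)
    have Yb: "\<bar>Y x\<bar> \<le> y0 + hy * (2*pi) powr al" if "0 \<le> x" "x \<le> 2*pi" for x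
    proof -
      have "\<bar>Y x\<bar> \<le> \<bar>Y 0\<bar> + hnorm al Y * x powr al"
        using Y_bound[OF pY, of al x] hf(2) that al0 by (simp add: al_def)
      moreover have "hy * x powr al \<le> hy * (2*pi) powr al"
        using that nn(2) al0 by (intro mult_left_mono powr_mono2) auto
      ultimately show ?thesis by (simp add: y0_def hy_def al_def)
    qed
    have M0: "0 \<le> MF" "0 \<le> lam * MD" "0 \<le> y0 + hy * (2*pi) powr al" using MF(1) MD(1) l0 nn by auto
    show ?thesis
      using germ_delta[OF kap rp hf(1,3,4,5,6), of 0 "2*pi" F MF "lam * MD" "y0 + hy * (2*pi) powr al" a b d]
        Fb Lb Yb M0 abd
      unfolding Xi_def hr_def hx_def hy'_def hxx_def sy'_def by simp
  qed
  have Eg: "partition N e" unfolding N_def e_def by (rule Egrid(2)[OF lam])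
  have ek: "e k = real k / lam" if "k < N" for k
    using Egrid(1)[OF lam, of k] that by (simp add: e_def N_def)
  define g where "g k = c1 * (m k * (hr * hx + hy' * hxx)) * il powr (1 + kap)
     + c2 * ((lam * m k) * (y0 + hy * ((real k + 1) / lam) powr al) * hx) * il powr (3/2 - kap)
     + c3 * ((lam * m k) * sy' * hxx) * il powr (2 - 2*kap)" for k
  have gk: "\<bar>ssum Xi A - Xi (Min A) (Max A)\<bar> \<le> g k"
    if kN: "k < N" and A: "finite A" "A \<noteq> {}" "A \<subseteq> {e k..e (Suc k)}" for k A
  proof -
    define lo where "lo = e k"
    define hi where "hi = e (Suc k)"
    define MY where "MY = y0 + hy * ((real k + 1) / lam) powr al"
    have lo: "lo = real k / lam" using ek[OF kN] by (simp add: lo_def)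
    have lo0: "0 \<le> lo" using lo l0 by simp
    have hi1: "hi \<le> (real k + 1) / lam" "hi \<le> 2*pi" by (auto simp: hi_def e_def add.commute)
    have lohi: "lo < hi" using Eg kN unfolding partition_def lo_def hi_def by blast
    have "(real k + 1) / lam = real k / lam + 1 / lam" by (simp add: add_divide_distrib)
    then have hil: "hi - lo \<le> il" using hi1 lo unfolding il_def by linarith
    have il1: "il \<le> 1" using lam by (simp add: il_def)
    have al0: "0 < al" using kap by (simp add: al_def)
    have lamx: "real k \<le> lam * x" "lam * x \<le> real k + 1" if "lo \<le> x" "x \<le> hi" for x
    proof -
      have "lam * lo \<le> lam * x" "lam * x \<le> lam * hi" using that l0 by auto
      moreover have "lam * lo = real k" using lo l0 by simp
      moreover have "lam * hi \<le> real k + 1" using hi1(1) l0 by (simp add: field_simps)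
      ultimately show "real k \<le> lam * x" "lam * x \<le> real k + 1" by auto
    qed
    have Fb: "\<bar>F x\<bar> \<le> m k" if "lo \<le> x" "x \<le> hi" for x
      using msup_bound(1)[OF Cf lamx[OF that]] by (simp add: F_def m_def)
    have Lb: "\<bar>F v - F u\<bar> \<le> (lam * m k) * (v - u)" if "lo \<le> u" "u \<le> v" "v \<le> hi" for u v
    proof -
      have "real k \<le> lam * u" "lam * u \<le> lam * v" "lam * v \<le> real k + 1"
        using lamx[of u] lamx[of v] that l0 by auto
      moreover have "\<And>x. real k \<le> x \<Longrightarrow> x \<le> real k + 1 \<Longrightarrow> \<bar>deriv f x\<bar> \<le> m k"
        using msup_bound(2)[OF Cf] by (simp add: m_def)
      ultimately have "\<bar>f (lam * v) - f (lam * u)\<bar> \<le> m k * (lam * v - lam * u)"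
        using lip[OF ffacts(1), of "real k" "real k + 1" "m k" "lam * u" "lam * v"] by blast
      then show ?thesis by (simp add: F_def algebra_simps)
    qed
    have Yb: "\<bar>Y x\<bar> \<le> MY" if "lo \<le> x" "x \<le> hi" for x
    proof -
      have x0: "0 \<le> x" "x \<le> 2*pi" using that lo0 hi1 by auto
      have "\<bar>Y x\<bar> \<le> \<bar>Y 0\<bar> + hnorm al Y * x powr al"
        using Y_bound[OF pY, of al x] hf(2) x0 al0 by (simp add: al_def)
      moreover have "hy * x powr al \<le> hy * ((real k + 1) / lam) powr al"
        using that nn(2) al0 x0 hi1 by (intro mult_left_mono powr_mono2) auto
      ultimately show ?thesis by (simp add: y0_def hy_def al_def MY_def)
    qed
    have M0: "0 \<le> m k" "0 \<le> lam * m k" "0 \<le> MY" using mpos l0 nn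
      by (auto simp: MY_def)
    have dX: "\<bar>Xi a d - Xi a b - Xi b d\<bar> \<le>
       m k * (hr * hx + hy' * hxx) * (d - a) powr (1 + kap)
       + (lam * m k) * MY * hx * (d - a) powr (3/2 - kap)
       + (lam * m k) * sy' * hxx * (d - a) powr (2 - 2*kap)"
      if abd: "lo \<le> a" "a \<le> b" "b \<le> d" "d \<le> hi" for a b d
    proof -
      have "d - a \<le> 1" using abd hil il1 by linarith
      then show ?thesis
        using germ_delta[OF kap rp hf(1,3,4,5,6), of lo hi F "m k" "lam * m k" MY a b d]
          Fb Lb Yb M0 abd lo0 hi1
        unfolding Xi_def hr_def hx_def hy'_def hxx_def sy'_def by simp
    qed
    have Kn: "0 \<le> m k * (hr * hx + hy' * hxx)" "0 \<le> (lam * m k) * MY * hx" "0 \<le> (lam * m k) * sy' * hxx"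
      using M0 nn by auto
    have sw: "\<bar>ssum Xi A - Xi (Min A) (Max A)\<bar> \<le>
        cst (1 + kap) * (m k * (hr * hx + hy' * hxx)) * (Max A - Min A) powr (1 + kap)
      + cst (3/2 - kap) * ((lam * m k) * MY * hx) * (Max A - Min A) powr (3/2 - kap)
      + cst (2 - 2*kap) * ((lam * m k) * sy' * hxx) * (Max A - Min A) powr (2 - 2*kap)"
    proof (rule sewing3[where lo = lo and hi = hi])
      show "\<And>a. lo \<le> a \<Longrightarrow> a \<le> hi \<Longrightarrow> Xi a a = 0" using diag by simp
      show "\<And>a b d. lo \<le> a \<Longrightarrow> a \<le> b \<Longrightarrow> b \<le> d \<Longrightarrow> d \<le> hi \<Longrightarrow>
        \<bar>Xi a d - Xi a b - Xi b d\<bar> \<le> m k * (hr * hx + hy' * hxx) * (d - a) powr (1 + kap)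
          + (lam * m k) * MY * hx * (d - a) powr (3/2 - kap) + (lam * m k) * sy' * hxx * (d - a) powr (2 - 2*kap)"
        by (rule dX)
    qed (use Kn kap A in \<open>auto simp: lo_def hi_def\<close>)
    have D: "0 \<le> Max A - Min A" "Max A - Min A \<le> il"
    proof -
      have "Min A \<in> A" "Max A \<in> A" using A Min_in Max_in by auto
      then have "lo \<le> Min A" "Max A \<le> hi" "Min A \<le> Max A" using A by (auto simp: lo_def hi_def)
      then show "0 \<le> Max A - Min A" "Max A - Min A \<le> il" using hil by auto
    qed
    have pw: "(Max A - Min A) powr t \<le> il powr t" if "0 \<le> t" for t
      using D that by (intro powr_mono2) auto
    have "cst (1 + kap) * (m k * (hr * hx + hy' * hxx)) * (Max A - Min A) powr (1 + kap)
      + cst (3/2 - kap) * ((lam * m k) * MY * hx) * (Max A - Min A) powr (3/2 - kap)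
      + cst (2 - 2*kap) * ((lam * m k) * sy' * hxx) * (Max A - Min A) powr (2 - 2*kap) \<le> g k"
      unfolding g_def c1_def[symmetric] c2_def[symmetric] c3_def[symmetric] MY_def[symmetric]
      using cpos Kn kap pw
      by (intro add_mono mult_left_mono) auto
    then show ?thesis using sw by (simp add: c1_def c2_def c3_def)
  qed
  obtain I where I1: "\<forall>\<epsilon>>0. \<exists>\<delta>>0. \<forall>n p. partition n p \<and> mesh n p < \<delta> \<longrightarrow>
              \<bar>(\<Sum>k<n. Xi (p k) (p (Suc k))) - I\<bar> < \<epsilon>"
     and I2: "\<bar>I\<bar> \<le> \<bar>\<Sum>k<N. Xi (e k) (e (Suc k))\<bar> + (\<Sum>k<N. g k)"
  proof -
    have diag': "\<And>a. 0 \<le> a \<Longrightarrow> a \<le> 2*pi \<Longrightarrow> Xi a a = 0" using diag by simp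
    have Kn: "0 \<le> MF * (hr * hx + hy' * hxx)" "0 \<le> (lam * MD) * (y0 + hy * (2*pi) powr al) * hx"
      "0 \<le> (lam * MD) * sy' * hxx"
      using MF(1) MD(1) nn l0 by auto
    have "\<exists>I. (\<forall>\<epsilon>>0. \<exists>\<delta>>0. \<forall>n p. partition n p \<and> mesh n p < \<delta> \<longrightarrow>
              \<bar>(\<Sum>k<n. Xi (p k) (p (Suc k))) - I\<bar> < \<epsilon>)
           \<and> \<bar>I\<bar> \<le> \<bar>\<Sum>k<N. Xi (e k) (e (Suc k))\<bar> + (\<Sum>k<N. g k)"
      by (rule abstract_main[where Xi = Xi and g = g and N = N and e = e, OF diag' gdXi Kn mu0 th Eg gk])
    then show ?thesis using that by blast
  qed
  have rs: "rsum (\<lambda>x. f (lam * x) * Y x) (\<lambda>x. f (lam * x) * Y' x) X XX n p = (\<Sum>k<n. Xi (p k) (p (Suc k)))"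
    if "partition n p" for n p
    using that unfolding rsum_def Xi_def germ_def F_def partition_def
    by (intro sum.cong) auto
  have HI: "has_rough_integral (\<lambda>x. f (lam * x) * Y x) (\<lambda>x. f (lam * x) * Y' x) X XX I"
    unfolding has_rough_integral_def using I1 rs by metis
  define cn where "cn = cnorm (3*kap) Y'"
  define D where "D = 1 + c1 + c2 + c3"
  define W where "W = L1 * y0 * hx + L2 * (hy * hx + hxx * cn + hr * hx)"
  have cn: "cn = hy' + sy'" by (simp add: cn_def cnorm_def hy'_def sy'_def)
  have W0: "0 \<le> W" using nn cn by (simp add: W_def)
  have D0: "0 \<le> D" using cpos by (simp add: D_def)
  have perk: "\<bar>Xi (e k) (e (Suc k))\<bar> + g k \<le> D * tseq f (int k) * W" if kN: "k < N" for k
  proof -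
    define a where "a = e k"
    define b where "b = e (Suc k)"
    define r where "r = sqrt (1 + real k)"
    define ka where "ka = real k powr al"
    define k1a where "k1a = (real k + 1) powr al"
    have al0: "0 < al" "al \<le> 1/2" using kap by (auto simp: al_def)
    have a: "a = real k / lam" using ek[OF kN] by (simp add: a_def)
    have a0: "0 \<le> a" using a l0 by simp
    have b1: "b \<le> (real k + 1) / lam" "b \<le> 2*pi" by (auto simp: b_def e_def add.commute)
    have ab: "a < b" using Eg kN unfolding partition_def a_def b_def by blast
    have "(real k + 1) / lam = real k / lam + 1 / lam" by (simp add: add_divide_distrib)
    then have bal: "b - a \<le> il" using b1 a unfolding il_def by linarith
    have il1: "il \<le> 1" using lam by (simp add: il_def)
    have a2: "a < 2*pi" "b < a + 2*pi" using ab b1 a0 bal il1 pi2_gt1 by auto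
    have lama: "lam * a = real k" using a l0 by simp
    have Fa: "\<bar>F a\<bar> \<le> m k" using msup_bound(1)[OF Cf, of "real k" "lam * a"] lama
      by (simp add: F_def m_def)
    have Ya: "\<bar>Y a\<bar> \<le> y0 + hy * ka * L1"
    proof -
      have "\<bar>Y a\<bar> \<le> \<bar>Y 0\<bar> + hnorm al Y * a powr al"
        using Y_bound[OF pY, of al a] hf(2) a0 a2 al0 by (simp add: al_def)
      moreover have "a powr al = ka * L1" unfolding a ka_def L1_def al_def by (rule EF(7)) simp
      ultimately show ?thesis by (simp add: y0_def hy_def al_def)
    qed
    have dXa: "\<bar>incr X a b\<bar> \<le> hx * L1"
    proof -
      have "\<bar>incr X a b\<bar> \<le> hx * (b - a) powr (1/2 - kap)"
        unfolding hx_def by (rule holder1[OF hf(1) a0 a2(1) ab a2(2)])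
      also have "\<dots> \<le> hx * il powr (1/2 - kap)"
        using bal ab nn kap by (intro mult_left_mono powr_mono2) auto
      also have "il powr (1/2 - kap) = L1" unfolding il_def L1_def by (rule EF(1))
      finally show ?thesis .
    qed
    have XXa: "\<bar>XX a b\<bar> \<le> hxx * L2"
    proof -
      have "\<bar>XX a b\<bar> \<le> hxx * (b - a) powr (1 - 2*kap)"
        unfolding hxx_def by (rule holder2[OF hf(3) a0 a2(1) ab a2(2)])
      also have "\<dots> \<le> hxx * il powr (1 - 2*kap)"
        using bal ab nn kap by (intro mult_left_mono powr_mono2) auto
      also have "il powr (1 - 2*kap) = L2" unfolding il_def L2_def by (rule EF(2))
      finally show ?thesis .
    qed
    have Y'a: "\<bar>Y' a\<bar> \<le> sy'" using sup_bound[OF hf(5) a0 a2(1)] by (simp add: sy'_def)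
    have Xv: "\<bar>Xi a b\<bar> \<le> m k * (y0 + hy * ka * L1) * hx * L1 + m k * sy' * hxx * L2"
    proof -
      have t1: "\<bar>F a * Y a * incr X a b\<bar> \<le> m k * (y0 + hy * ka * L1) * (hx * L1)"
        by (rule abs3[OF Fa Ya dXa])
      have t2: "\<bar>F a * Y' a * XX a b\<bar> \<le> m k * sy' * (hxx * L2)"
        by (rule abs3[OF Fa Y'a XXa])
      have "\<bar>Xi a b\<bar> \<le> \<bar>F a * Y a * incr X a b\<bar> + \<bar>F a * Y' a * XX a b\<bar>"
        using ab unfolding Xi_def germ_def by (simp add: abs_triangle_ineq)
      then show ?thesis using t1 t2 by (simp add: algebra_simps)
    qed
    have gv: "g k \<le> c1 * m k * (hr * hx + hy' * hxx) * L2 + c2 * m k * y0 * hx * L1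
             + c2 * m k * hy * k1a * hx * L2 + c3 * m k * sy' * hxx * L2"
    proof -
      have T1: "c1 * (m k * (hr * hx + hy' * hxx)) * il powr (1 + kap) \<le> c1 * (m k * (hr * hx + hy' * hxx)) * L2"
        unfolding il_def L2_def using EF(3) cpos mpos nn by (intro mult_left_mono) auto
      have k1: "((real k + 1) / lam) powr al = k1a * L1"
        unfolding k1a_def L1_def al_def by (rule EF(7)) simp
      have T2: "c2 * ((lam * m k) * (y0 + hy * ((real k + 1) / lam) powr al) * hx) * il powr (3/2 - kap)
          = c2 * m k * (y0 + hy * k1a * L1) * hx * (lam * il powr (3/2 - kap))"
        unfolding k1 by (simp add: algebra_simps)
      have T2': "lam * il powr (3/2 - kap) = L1" unfolding il_def L1_def by (rule EF(4))
      have T3: "c3 * ((lam * m k) * sy' * hxx) * il powr (2 - 2*kap) = c3 * m k * sy' * hxx * (lam * il powr (2 - 2*kap))"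
        by (simp add: algebra_simps)
      have T3': "lam * il powr (2 - 2*kap) = L2" unfolding il_def L2_def by (rule EF(5))
      have LL: "L1 * L1 = L2" unfolding L1_def L2_def by (rule EF(6))
      have E2: "c2 * m k * (y0 + hy * k1a * L1) * hx * L1 = c2 * m k * y0 * hx * L1 + c2 * m k * hy * k1a * hx * L2"
        unfolding LL[symmetric] by (simp add: algebra_simps)
      show ?thesis unfolding g_def T2 T2' T3 T3' E2 using T1 by (simp add: algebra_simps)
    qed
    have r1: "1 \<le> r" by (simp add: r_def)
    have rsq: "x powr al \<le> r" if "0 \<le> x" "x \<le> 1 + real k" for x
    proof -
      have "x powr al \<le> (1 + real k) powr al" using that al0 by (intro powr_mono2) auto
      also have "\<dots> \<le> (1 + real k) powr (1/2)" using al0 by (intro powr_mono) auto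
      also have "\<dots> = r" by (simp add: r_def powr_half_sqrt)
      finally show ?thesis .
    qed
    have kar: "ka \<le> r" "k1a \<le> r" unfolding ka_def k1a_def using rsq by auto
    have kan: "0 \<le> ka" "0 \<le> k1a" by (auto simp: ka_def k1a_def)
    have "\<bar>Xi a b\<bar> + g k \<le> (1 + c1 + c2 + c3) * (r * m k) * (L1 * y0 * hx + L2 * (hy * hx + hxx * cn + hr * hx))"
      by (rule final_arith[OF mpos nn(7) nn(1) nn(2) nn(3) nn(4) nn(5) nn(6) nn(8) nn(9)
            less_imp_le[OF cpos(1)] less_imp_le[OF cpos(2)] less_imp_le[OF cpos(3)] kan kar r1 cn Xv gv])
         (unfold L1_def L2_def, rule EF(6))
    moreover have "tseq f (int k) = r * m k" by (simp add: tseq_eq r_def m_def)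
    ultimately show ?thesis by (simp add: D_def W_def a_def b_def)
  qed
  have "\<bar>I\<bar> \<le> \<bar>\<Sum>k<N. Xi (e k) (e (Suc k))\<bar> + (\<Sum>k<N. g k)" by (rule I2)
  also have "\<dots> \<le> (\<Sum>k<N. \<bar>Xi (e k) (e (Suc k))\<bar>) + (\<Sum>k<N. g k)" by (simp add: sum_abs)
  also have "\<dots> = (\<Sum>k<N. \<bar>Xi (e k) (e (Suc k))\<bar> + g k)" by (simp add: sum.distrib)
  also have "\<dots> \<le> (\<Sum>k<N. D * tseq f (int k) * W)" by (rule sum_mono) (use perk in auto)
  also have "\<dots> = D * W * (\<Sum>k<N. tseq f (int k))" by (simp add: sum_distrib_left algebra_simps)
  also have "\<dots> \<le> D * W * triple f" using tsum_le[OF Cf Tf] D0 W0 by (intro mult_left_mono) auto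
  finally have "\<bar>I\<bar> \<le> D * triple f * W" by (simp add: algebra_simps)
  moreover have "W = lam powr (kap - 1/2) * \<bar>Y 0\<bar> * hnorm (1/2 - kap) X + lam powr (2*kap - 1) * Kkappa kap Y Y' X XX"
    by (simp add: W_def L1_def L2_def y0_def hx_def hy_def hxx_def cn_def hr_def Kkappa_def algebra_simps)
  ultimately show ?thesis using HI by (auto simp: D_def c1_def c2_def c3_def)
qed


theorem proposition3p8:
  fixes \<kappa> :: real
  assumes "0 < \<kappa>" and "\<kappa> < 1/2"
  shows "\<exists>C :: real \<Rightarrow> real. \<forall>f lam X XX Y Y'.
    C1 f \<and> triple_finite f \<and> lam \<ge> 1 \<and> rough_path X XX \<and>
    circ_periodic Y \<and> circ_periodic Y' \<and>
    hfin (1/2 - \<kappa>) X \<and> hfin (1/2 - \<kappa>) Y \<and> hfin2 (1 - 2*\<kappa>) XX \<and>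
    hfin (3*\<kappa>) Y' \<and> supfin Y' \<and> hfin2 (1/2 + 2*\<kappa>) (remainder Y Y' X)
    \<longrightarrow> (\<exists>I. has_rough_integral (\<lambda>x. f (lam * x) * Y x) (\<lambda>x. f (lam * x) * Y' x) X XX I \<and>
             \<bar>I\<bar> \<le> C (triple f) * (lam powr (\<kappa> - 1/2) * \<bar>Y 0\<bar> * hnorm (1/2 - \<kappa>) X
                                   + lam powr (2*\<kappa> - 1) * Kkappa \<kappa> Y Y' X XX))"
proof -
  define D where "D = 1 + cst (1 + \<kappa>) + cst (3/2 - \<kappa>) + cst (2 - 2*\<kappa>)"
  show ?thesis
  proof (rule exI[of _ "\<lambda>t. D * t"], intro allI impI)
    fix f :: "real \<Rightarrow> real" and lam :: real and X Y Y' :: "real \<Rightarrow> real"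
      and XX :: "real \<Rightarrow> real \<Rightarrow> real"
    assume H: "C1 f \<and> triple_finite f \<and> lam \<ge> 1 \<and> rough_path X XX \<and>
      circ_periodic Y \<and> circ_periodic Y' \<and>
      hfin (1/2 - \<kappa>) X \<and> hfin (1/2 - \<kappa>) Y \<and> hfin2 (1 - 2*\<kappa>) XX \<and>
      hfin (3*\<kappa>) Y' \<and> supfin Y' \<and> hfin2 (1/2 + 2*\<kappa>) (remainder Y Y' X)"
    show "\<exists>I. has_rough_integral (\<lambda>x. f (lam * x) * Y x) (\<lambda>x. f (lam * x) * Y' x) X XX I \<and>
             \<bar>I\<bar> \<le> D * triple f * (lam powr (\<kappa> - 1/2) * \<bar>Y 0\<bar> * hnorm (1/2 - \<kappa>) X
                                   + lam powr (2*\<kappa> - 1) * Kkappa \<kappa> Y Y' X XX)"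
      proof -
        from H have h: "C1 f" "triple_finite f" "lam \<ge> 1" "rough_path X XX" "circ_periodic Y" "circ_periodic Y'"
          "hfin (1/2 - \<kappa>) X" "hfin (1/2 - \<kappa>) Y" "hfin2 (1 - 2*\<kappa>) XX" "hfin (3*\<kappa>) Y'" "supfin Y'"
          "hfin2 (1/2 + 2*\<kappa>) (remainder Y Y' X)" by blast+
        show ?thesis unfolding D_def by (rule main_bound[OF assms h])
      qed
  qed
qed

end
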